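(* Let $m,n,p\ge1$, $B\in\mathbb{R}^{m\times n}$, let $J:\mathbb{R}^p\to\mathbb{R}^{m\times n}$ be linear with adjoint $J^*$ and $J^*J$ invertible, and let $\lambda>0$. Consider the problem $$\min_{X,E,\Delta\tau}\big\{\|X\|_*+\lambda\|E\|_1:\ B+J\Delta\tau=X+E\big\}\qquad (P)$$ over $X,E\in\mathbb{R}^{m\times n}$, $\Delta\tau\in\mathbb{R}^p$. Fix $\sigma>0$, $\rho\in(0,2)$ and a starting point $\tilde\Omega^0=(\tilde X^0,\Delta\tilde\tau^0,\tilde E^0,\tilde Y^0)$, and generate for $k=0,1,\dots$ (sGS-ADMM\_G): 1. $\Delta\tau^{k+1/2}=-(J^*J)^{-1}[J^*(B-\tilde X^k-\tilde E^k)+J^*\tilde Y^k/\sigma]$; 2. $E^{k+1}=\mathcal{S}_{\lambda/\sigma}(B+J\Delta\tau^{k+1/2}-\tilde X^k+\tilde Y^k/\sigma)$; 3. $\Delta\tau^{k+1}=-(J^*J)^{-1}[J^*(B-\tilde X^k-E^{k+1})+J^*\tilde Y^k/\sigma]$; 4. $Y^{k+1}=\tilde Y^k+\sigma(B+J\Delta\tau^{k+1}-\tilde X^k-E^{k+1})$; 5. $X^{k+1}=\mathcal{D}_{1/\sigma}(B+J\Delta\tau^{k+1}-E^{k+1}+Y^{k+1}/\sigma)$; 6. with $\Omega^{k+1}=(X^{k+1},\Delta\tau^{k+1},E^{k+1},Y^{k+1})$, set $\tilde\Omega^{k+1}=\tilde\Omega^k+\rho(\Omega^{k+1}-\tilde\Omega^k)$.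 Then the sequence $\{(X^k,\Delta\tau^k,E^k,Y^k)\}$ is well defined and converges to a limit $(\bar X,\Delta\bar\tau,\bar E,\bar Y)$ such that $(\bar X,\Delta\bar\tau,\bar E)$ is an optimal solution of $(P)$.
   Context: $\|X\|_*$ is the nuclear norm, $\|E\|_1$ the entrywise $\ell_1$ norm, $\|\cdot\|_F$ the Frobenius norm. For $\mu>0$, $\mathcal{D}_\mu(X)=\operatorname{argmin}_Y\{\|Y\|_*+\frac1{2\mu}\|Y-X\|_F^2\}=U\,\mathrm{diag}(\max\{\sigma_i-\mu,0\})V^\top$ where $X=U\,\mathrm{diag}(\sigma_i)V^\top$ is an SVD, and $\mathcal{S}_\mu(X)$ is entrywise soft-thresholding $[\mathcal{S}_\mu(X)]_{ij}=\mathrm{sgn}(X_{ij})\max\{|X_{ij}|-\mu,0\}$. In the application $B=D\circ\tau$ is the current transformed image and $J$ its Jacobian with respect to the transform parameters. *)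

theory Defs
  imports "HOL-Analysis.Analysis"
begin

text \<open>Matrices in R^{m x n} are rendered as real^'n^'m; the Euclidean norm on this
type is the Frobenius norm and the inner product is the trace inner product.\<close>

definition outer :: "real^'m \<Rightarrow> real^'n \<Rightarrow> real^'n^'m" where
  "outer u v = (\<chi> i j. u$i * v$j)"

text \<open>Nuclear norm = sum of singular values, read off from a (compact) SVD
  X = sum_k s_k u_k v_k^T with orthonormal u_k, orthonormal v_k and s_k > 0.\<close>
definition is_svd :: "real^'n^'m \<Rightarrow> nat set \<Rightarrow> (nat \<Rightarrow> real) \<Rightarrow> (nat \<Rightarrow> real^'m)
    \<Rightarrow> (nat \<Rightarrow> real^'n) \<Rightarrow> bool" where
  "is_svd X K s u v \<longleftrightarrow> finite K \<and> (\<forall>k\<in>K. s k > 0)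
     \<and> (\<forall>k\<in>K. \<forall>l\<in>K. u k \<bullet> u l = (if k = l then 1 else 0))
     \<and> (\<forall>k\<in>K. \<forall>l\<in>K. v k \<bullet> v l = (if k = l then 1 else 0))
     \<and> X = (\<Sum>k\<in>K. s k *\<^sub>R outer (u k) (v k))"

definition nuclear_norm :: "real^'n^'m \<Rightarrow> real" where
  "nuclear_norm X = (THE r. \<exists>K s u v. is_svd X K s u v \<and> r = (\<Sum>k\<in>K. s k))"

definition l1_norm :: "real^'n^'m \<Rightarrow> real" where
  "l1_norm X = (\<Sum>i\<in>UNIV. \<Sum>j\<in>UNIV. \<bar>X$i$j\<bar>)"

text \<open>Singular value thresholding as the proximal map of the nuclear norm.\<close>
definition svt :: "real \<Rightarrow> real^'n^'m \<Rightarrow> real^'n^'m" where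
  "svt \<mu> X = (THE Y. \<forall>Z. nuclear_norm Y + 1 / (2*\<mu>) * (norm (Y - X))^2
                        \<le> nuclear_norm Z + 1 / (2*\<mu>) * (norm (Z - X))^2)"

definition soft :: "real \<Rightarrow> real^'n^'m \<Rightarrow> real^'n^'m" where
  "soft \<mu> X = (\<chi> i j. sgn (X$i$j) * max (\<bar>X$i$j\<bar> - \<mu>) 0)"

definition optimal_P :: "real \<Rightarrow> real^'n^'m \<Rightarrow> (real^'p \<Rightarrow> real^'n^'m)
   \<Rightarrow> real^'n^'m \<Rightarrow> real^'p \<Rightarrow> real^'n^'m \<Rightarrow> bool" where
  "optimal_P lam B J X t E \<longleftrightarrow> B + J t = X + E \<and>
     (\<forall>X' t' E'. B + J t' = X' + E' \<longrightarrow>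
        nuclear_norm X + lam * l1_norm E \<le> nuclear_norm X' + lam * l1_norm E')"

end

theory Submission
  imports Defs
begin

definition opb :: "real^'n^'m \<Rightarrow> bool" where
  "opb W \<longleftrightarrow> (\<forall>a b. norm a = 1 \<longrightarrow> norm b = 1 \<longrightarrow> a \<bullet> (W *v b) \<le> 1)"

definition NN :: "real^'n^'m \<Rightarrow> real" where
  "NN X = Sup {X \<bullet> W | W. opb W}"

lemma inner_mat: "(A::real^'n^'m) \<bullet> B = (\<Sum>i\<in>UNIV. \<Sum>j\<in>UNIV. A$i$j * B$i$j)"
  by (simp add: inner_vec_def)

lemma L_outer: "a \<bullet> ((M::real^'n^'m) *v b) = M \<bullet> outer a b"
  by (simp add: inner_mat inner_vec_def matrix_vector_mult_def outer_def sum_distrib_left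
      algebra_simps)

lemma outer_inner: "outer a b \<bullet> outer c d = (a \<bullet> c) * ((b::real^'n) \<bullet> d)"
  by (simp add: inner_mat inner_vec_def outer_def sum_product algebra_simps)

lemma norm_outer: "norm (outer a b) = norm a * norm (b::real^'n)"
  by (simp add: norm_eq_sqrt_inner outer_inner real_sqrt_mult)

lemma opb_0: "opb 0"
  by (simp add: opb_def)

lemma opb_entry: assumes "opb W" shows "\<bar>W$i$j\<bar> \<le> 1"
proof -
  have e: "W$i$j = axis i 1 \<bullet> (W *v axis j 1)"
  proof -
    have "W *v axis j 1 = (\<chi> i. W$i$j)"
      by (simp add: matrix_vector_mult_def axis_def vec_eq_iff if_distrib cong: if_cong)
    then show ?thesis by (simp add: inner_axis')
  qed
  have 1: "W$i$j \<le> 1" using assms unfolding opb_def e by (simp add: norm_axis_1)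
  have "(- axis i 1) \<bullet> (W *v axis j 1) \<le> 1" using assms unfolding opb_def
    by (metis norm_minus_cancel norm_axis_1)
  then have "-(W$i$j) \<le> 1" using e by (simp add: inner_minus_left)
  then show ?thesis using 1 by linarith
qed

lemma inner_le_l1: assumes "opb W" shows "X \<bullet> W \<le> l1_norm X"
  unfolding inner_mat l1_norm_def
proof (intro sum_mono)
  fix i j
  have "X$i$j * W$i$j \<le> \<bar>X$i$j\<bar> * \<bar>W$i$j\<bar>" by (simp add: abs_mult[symmetric])
  also have "\<dots> \<le> \<bar>X$i$j\<bar>" using opb_entry[OF assms, of i j]
    by (simp add: mult_left_le)
  finally show "X$i$j * W$i$j \<le> \<bar>X$i$j\<bar>" .
qed

lemma NN_bdd: "bdd_above {X \<bullet> W | W. opb W}"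
  using inner_le_l1 by (auto intro!: bdd_aboveI[of _ "l1_norm X"])

lemma NN_ge: "opb W \<Longrightarrow> X \<bullet> W \<le> NN X"
  unfolding NN_def by (rule cSup_upper) (use NN_bdd in auto)

lemma NN_le: "(\<And>W. opb W \<Longrightarrow> X \<bullet> W \<le> c) \<Longrightarrow> NN X \<le> c"
  unfolding NN_def by (rule cSup_least) (use opb_0 in auto)

lemma NN_nonneg: "0 \<le> NN X"
  using NN_ge[OF opb_0, of X] by simp

lemma NN_le_l1: "NN X \<le> l1_norm X"
  by (rule NN_le) (rule inner_le_l1)

lemma l1_le: "l1_norm (X::real^'n^'m) \<le> real CARD('m) * real CARD('n) * norm X"
proof -
  have "l1_norm X \<le> (\<Sum>i\<in>(UNIV::'m set). \<Sum>j\<in>(UNIV::'n set). norm X)"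
    unfolding l1_norm_def
    by (intro sum_mono) (rule order_trans[OF component_le_norm_cart Finite_Cartesian_Product.norm_nth_le])
  then show ?thesis by simp
qed

lemma l1_nonneg: "0 \<le> l1_norm X"
  unfolding l1_norm_def by (intro sum_nonneg) auto

lemma NN_ge_norm: "norm (X::real^'n^'m) \<le> NN X"
proof (cases "X = 0")
  case True then show ?thesis by (simp add: NN_nonneg)
next
  case False
  define W where "W = (1 / norm X) *\<^sub>R X"
  have nW: "norm W = 1" using False by (simp add: W_def)
  have "opb W" unfolding opb_def
  proof (intro allI impI)
    fix a :: "real^'m" and b :: "real^'n" assume "norm a = 1" "norm b = 1"
    have "a \<bullet> (W *v b) \<le> norm W * norm (outer a b)"
      unfolding L_outer by (rule norm_cauchy_schwarz)
    then show "a \<bullet> (W *v b) \<le> 1" using nW \<open>norm a = 1\<close> \<open>norm b = 1\<close> by (simp add: norm_outer)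
  qed
  then have "X \<bullet> W \<le> NN X" by (rule NN_ge)
  moreover have "X \<bullet> W = norm X" using False
    by (simp add: W_def power2_norm_eq_inner[symmetric] power2_eq_square)
  ultimately show ?thesis by simp
qed

lemma NN_add: "NN (X + Y) \<le> NN X + NN Y"
  by (rule NN_le) (simp add: inner_add_left add_mono NN_ge)

lemma NN_convex: "convex_on UNIV NN"
proof (rule convex_onI)
  fix t :: real and x y :: "real^'n^'m" assume t: "0 < t" "t < 1"
  show "NN ((1 - t) *\<^sub>R x + t *\<^sub>R y) \<le> (1 - t) * NN x + t * NN y"
  proof (rule NN_le)
    fix W :: "real^'n^'m" assume "opb W"
    then have "x \<bullet> W \<le> NN x" "y \<bullet> W \<le> NN y" by (auto intro: NN_ge)
    then have "(1 - t) * (x \<bullet> W) + t * (y \<bullet> W) \<le> (1 - t) * NN x + t * NN y"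
      using t by (intro add_mono mult_left_mono) auto
    then show "((1 - t) *\<^sub>R x + t *\<^sub>R y) \<bullet> W \<le> (1 - t) * NN x + t * NN y"
      by (simp add: inner_add_left)
  qed
qed simp

lemma NN_lip: "\<bar>NN X - NN (Y::real^'n^'m)\<bar> \<le> real CARD('m) * real CARD('n) * norm (X - Y)"
proof -
  have a: "NN X \<le> NN Y + NN (X - Y)" using NN_add[of Y "X - Y"] by simp
  have b: "NN Y \<le> NN X + NN (Y - X)" using NN_add[of X "Y - X"] by simp
  have c: "NN (X - Y) \<le> real CARD('m) * real CARD('n) * norm (X - Y)"
    using NN_le_l1 l1_le order_trans by blast
  have d: "NN (Y - X) \<le> real CARD('m) * real CARD('n) * norm (X - Y)"
    using NN_le_l1[of "Y - X"] l1_le[of "Y - X"] by (simp add: norm_minus_commute)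
  show ?thesis using a b c d by linarith
qed

lemma amgm: fixes x y :: real shows "x*y \<le> (x^2+y^2)/2"
proof -
  have "0 \<le> (x-y)^2" by simp
  thus ?thesis by (simp add: power2_diff field_simps)
qed

lemma svd_apply:
  assumes "is_svd X K s u v"
  shows "c \<bullet> (X *v w) = (\<Sum>k\<in>K. s k * ((u k \<bullet> c) * (v k \<bullet> w)))"
proof -
  have X: "X = (\<Sum>k\<in>K. s k *\<^sub>R outer (u k) (v k))" using assms by (simp add: is_svd_def)
  show ?thesis unfolding L_outer X
    by (simp add: inner_sum_left outer_inner)
qed

lemma bessel:
  fixes u :: "nat \<Rightarrow> 'a::real_inner"
  assumes fin: "finite K" and on: "\<forall>k\<in>K. \<forall>l\<in>K. u k \<bullet> u l = (if k = l then 1 else 0)"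
  shows "(\<Sum>k\<in>K. (u k \<bullet> a)^2) \<le> a \<bullet> a"
proof -
  define c where "c k = u k \<bullet> a" for k
  define r where "r = a - (\<Sum>k\<in>K. c k *\<^sub>R u k)"
  have sq: "(\<Sum>k\<in>K. c k *\<^sub>R u k) \<bullet> (\<Sum>k\<in>K. c k *\<^sub>R u k) = (\<Sum>k\<in>K. (c k)^2)"
  proof -
    have "(\<Sum>k\<in>K. c k *\<^sub>R u k) \<bullet> (\<Sum>k\<in>K. c k *\<^sub>R u k)
       = (\<Sum>k\<in>K. \<Sum>l\<in>K. c k * (c l * (u l \<bullet> u k)))"
      by (simp add: inner_sum_left inner_sum_right sum_distrib_left mult.assoc)
    also have "\<dots> = (\<Sum>k\<in>K. \<Sum>l\<in>K. if k = l then c k * c l else 0)"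
      using on by (intro sum.cong refl) auto
    also have "\<dots> = (\<Sum>k\<in>K. (c k)^2)"
      using fin by (simp add: power2_eq_square)
    finally show ?thesis .
  qed
  have ia: "a \<bullet> (\<Sum>k\<in>K. c k *\<^sub>R u k) = (\<Sum>k\<in>K. (c k)^2)"
    by (simp add: inner_sum_right c_def power2_eq_square inner_commute)
  have "0 \<le> r \<bullet> r" by simp
  also have "r \<bullet> r = a \<bullet> a - (\<Sum>k\<in>K. (c k)^2)"
  proof -
    have Sa: "(\<Sum>k\<in>K. c k *\<^sub>R u k) \<bullet> a = (\<Sum>k\<in>K. (c k)^2)"
      by (simp add: inner_sum_left c_def power2_eq_square)
    show ?thesis unfolding r_def by (simp add: inner_diff_left inner_diff_right Sa ia sq)
  qed
  finally show ?thesis by (simp add: c_def)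
qed

lemma svd_NN:
  assumes svd: "is_svd (X::real^'n^'m) K s u v"
  shows "NN X = sum s K"
proof (rule antisym)
  have fin: "finite K" and sp: "\<forall>k\<in>K. s k > 0"
    and ou: "\<forall>k\<in>K. \<forall>l\<in>K. u k \<bullet> u l = (if k = l then 1 else 0)"
    and ov: "\<forall>k\<in>K. \<forall>l\<in>K. v k \<bullet> v l = (if k = l then 1 else 0)"
    and X: "X = (\<Sum>k\<in>K. s k *\<^sub>R outer (u k) (v k))"
    using svd by (auto simp: is_svd_def)
  have nu: "norm (u k) = 1" if "k \<in> K" for k
    using ou that by (simp add: norm_eq_sqrt_inner)
  have nv: "norm (v k) = 1" if "k \<in> K" for k
    using ov that by (simp add: norm_eq_sqrt_inner)
  show "NN X \<le> sum s K"
  proof (rule NN_le)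
    fix W :: "real^'n^'m" assume W: "opb W"
    have "X \<bullet> W = (\<Sum>k\<in>K. s k * (u k \<bullet> (W *v v k)))"
      unfolding X by (simp add: inner_sum_left inner_sum_right L_outer inner_commute)
    also have "\<dots> \<le> (\<Sum>k\<in>K. s k * 1)"
      using W nu nv sp unfolding opb_def
      by (intro sum_mono mult_left_mono) (auto intro: less_imp_le)
    finally show "X \<bullet> W \<le> sum s K" by simp
  qed
  define W0 where "W0 = (\<Sum>k\<in>K. outer (u k) (v k))"
  have "opb W0" unfolding opb_def
  proof (intro allI impI)
    fix a :: "real^'m" and b :: "real^'n" assume a: "norm a = 1" and b: "norm b = 1"
    have "a \<bullet> (W0 *v b) = (\<Sum>k\<in>K. (u k \<bullet> a) * (v k \<bullet> b))"
      unfolding L_outer W0_def by (simp add: inner_sum_left outer_inner)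
    also have "\<dots> \<le> (\<Sum>k\<in>K. ((u k \<bullet> a)^2 + (v k \<bullet> b)^2) / 2)"
      by (intro sum_mono amgm)
    also have "\<dots> = ((\<Sum>k\<in>K. (u k \<bullet> a)^2) + (\<Sum>k\<in>K. (v k \<bullet> b)^2)) / 2"
      by (simp add: sum.distrib sum_divide_distrib[symmetric])
    also have "\<dots> \<le> (a \<bullet> a + b \<bullet> b) / 2"
      using bessel[OF fin ou, of a] bessel[OF fin ov, of b] by simp
    also have "\<dots> = 1" using a b by (simp add: power2_norm_eq_inner[symmetric])
    finally show "a \<bullet> (W0 *v b) \<le> 1" .
  qed
  then have "X \<bullet> W0 \<le> NN X" by (rule NN_ge)
  moreover have "X \<bullet> W0 = sum s K"
  proof -
    have "X \<bullet> W0 = (\<Sum>k\<in>K. \<Sum>l\<in>K. s l * ((u l \<bullet> u k) * (v l \<bullet> v k)))"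
      unfolding X W0_def by (simp add: inner_sum_left inner_sum_right outer_inner)
    also have "\<dots> = (\<Sum>k\<in>K. \<Sum>l\<in>K. if k = l then s k else 0)"
      using ou ov by (intro sum.cong refl) auto
    also have "\<dots> = sum s K" using fin by simp
    finally show ?thesis .
  qed
  ultimately show "sum s K \<le> NN X" by simp
qed

lemma norm_le_from_sup:
  fixes w :: "'a::real_inner"
  assumes "\<forall>x. norm x = 1 \<longrightarrow> x \<bullet> w \<le> c" "0 \<le> c"
  shows "norm w \<le> c"
proof (cases "w = 0")
  case True then show ?thesis using assms by simp
next
  case False
  have "norm ((1 / norm w) *\<^sub>R w) = 1" using False by simp
  then have "((1 / norm w) *\<^sub>R w) \<bullet> w \<le> c" using assms by blast
  moreover have "((1 / norm w) *\<^sub>R w) \<bullet> w = norm w" using False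
    by (simp add: power2_norm_eq_inner[symmetric] power2_eq_square)
  ultimately show ?thesis by simp
qed

lemma cs_eq:
  fixes w :: "'a::real_inner"
  assumes "norm x = 1" "norm w \<le> c" "x \<bullet> w = c"
  shows "w = c *\<^sub>R x"
proof -
  have "x \<bullet> w \<le> norm x * norm w" by (rule norm_cauchy_schwarz)
  then have nw: "norm w = c" using assms by simp
  then have "x \<bullet> w = norm x * norm w" using assms by simp
  then have "norm x *\<^sub>R w = norm w *\<^sub>R x" by (simp add: norm_cauchy_schwarz_eq)
  then show ?thesis using assms nw by simp
qed

lemma entry_axis: "axis i 1 \<bullet> ((W::real^'n^'m) *v axis j 1) = W$i$j"
proof -
  have "W *v axis j 1 = (\<chi> i. W$i$j)"
    by (simp add: matrix_vector_mult_def axis_def vec_eq_iff if_distrib cong: if_cong)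
  then show ?thesis by (simp add: inner_axis')
qed

lemma deflate:
  fixes X :: "real^'n^'m"
  assumes "X \<noteq> 0"
  shows "\<exists>s a b. s > 0 \<and> norm a = 1 \<and> norm b = 1 \<and> X *v b = s *\<^sub>R a
            \<and> (\<forall>w. a \<bullet> (X *v w) = s * (b \<bullet> w))"
proof -
  define S where "S = sphere (0::real^'m) 1 \<times> sphere (0::real^'n) 1"
  have cS: "compact S" unfolding S_def by (intro compact_Times compact_sphere)
  have "(axis undefined 1, axis undefined 1) \<in> S" unfolding S_def by (simp add: norm_axis_1)
  then have neS: "S \<noteq> {}" by blast
  have cX: "continuous_on UNIV ((*v) X)"
    using matrix_vector_mul_linear linear_continuous_on linear_conv_bounded_linear by blast
  have cf: "continuous_on S (\<lambda>p. fst p \<bullet> (X *v snd p))"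
    by (intro continuous_intros continuous_on_compose2[OF cX]) auto
  obtain p where pS: "p \<in> S" and pmax: "\<forall>q\<in>S. fst q \<bullet> (X *v snd q) \<le> fst p \<bullet> (X *v snd p)"
    using continuous_attains_sup[OF cS neS cf] by blast
  define a where "a = fst p"
  define b where "b = snd p"
  define s where "s = a \<bullet> (X *v b)"
  have na: "norm a = 1" and nb: "norm b = 1" using pS by (auto simp: S_def a_def b_def)
  have mx: "a' \<bullet> (X *v b') \<le> s" if "norm a' = 1" "norm b' = 1" for a' b'
    using pmax[rule_format, of "(a', b')"] that by (simp add: S_def a_def b_def s_def)
  obtain i where "X$i \<noteq> 0" using assms by (metis vec_eq_iff zero_index)
  then obtain j where ij: "X$i$j \<noteq> 0" by (metis vec_eq_iff zero_index)
  have "X$i$j \<le> s" using mx[of "axis i 1" "axis j 1"] by (simp add: entry_axis norm_axis_1)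
  moreover have "- X$i$j \<le> s" using mx[of "- axis i 1" "axis j 1"]
    by (simp add: entry_axis norm_axis_1 inner_minus_left)
  ultimately have spos: "s > 0" using ij by linarith
  have w1: "X *v b = s *\<^sub>R a"
  proof (rule cs_eq[OF na])
    show "norm (X *v b) \<le> s"
      by (rule norm_le_from_sup) (use mx nb spos in auto)
    show "a \<bullet> (X *v b) = s" by (simp add: s_def)
  qed
  have w2: "a v* X = s *\<^sub>R b"
  proof (rule cs_eq[OF nb])
    show "norm (a v* X) \<le> s"
      by (rule norm_le_from_sup) (use mx na spos in \<open>auto simp: inner_commute[of _ "a v* X"] dot_lmul_matrix\<close>)
    show "b \<bullet> (a v* X) = s" by (simp add: s_def inner_commute[of b] dot_lmul_matrix)
  qed
  have "\<forall>w. a \<bullet> (X *v w) = s * (b \<bullet> w)"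
    using w2 by (metis dot_lmul_matrix inner_scaleR_left)
  then show ?thesis using spos na nb w1 by blast
qed

lemma svd_exists: "\<exists>K s u v. is_svd (X::real^'n^'m) K s u v"
proof (induction "CARD('n) - dim {x. X *v x = 0}" arbitrary: X rule: less_induct)
  case less
  show ?case
  proof (cases "X = 0")
    case True
    then have "is_svd X {} (\<lambda>_. 0) (\<lambda>_. 0) (\<lambda>_. 0)" by (simp add: is_svd_def)
    then show ?thesis by blast
  next
    case False
    obtain s a b where spos: "s > 0" and na: "norm a = 1" and nb: "norm b = 1"
      and Xb: "X *v b = s *\<^sub>R a" and aX: "\<forall>w. a \<bullet> (X *v w) = s * (b \<bullet> w)"
      using deflate[OF False] by blast
    have aa: "a \<bullet> a = 1" using na by (simp add: power2_norm_eq_inner[symmetric])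
    have bb: "b \<bullet> b = 1" using nb by (simp add: power2_norm_eq_inner[symmetric])
    define X' where "X' = X - s *\<^sub>R outer a b"
    have app: "c \<bullet> (X' *v w) = c \<bullet> (X *v w) - s * ((a \<bullet> c) * (b \<bullet> w))" for c w
      unfolding L_outer X'_def by (simp add: inner_diff_left outer_inner)
    have aX': "a \<bullet> (X' *v w) = 0" for w using app[of a w] aX aa by simp
    have X'b: "X' *v b = 0"
    proof -
      have "c \<bullet> (X' *v b) = 0" for c using app[of c b] Xb bb by (simp add: inner_commute[of c a])
      then show ?thesis by (metis inner_eq_zero_iff)
    qed
    define N where "N = {x. X *v x = 0}"
    define N' where "N' = {x. X' *v x = 0}"
    have sub: "N \<subseteq> N'"
    proof
      fix x assume "x \<in> N"
      then have Xx: "X *v x = 0" by (simp add: N_def)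
      then have "b \<bullet> x = 0" using aX[rule_format, of x] spos by simp
      then have "(X' *v x) \<bullet> (X' *v x) = 0" using app[of "X' *v x" x] Xx by simp
      then show "x \<in> N'" unfolding N'_def by simp
    qed
    have bN': "b \<in> N'" using X'b by (simp add: N'_def)
    have bN: "b \<notin> N" using Xb spos na by (auto simp: N_def)
    have sN: "span N = N" unfolding N_def
      by (simp add: span_eq_iff linear_subspace_kernel[OF matrix_vector_mul_linear])
    have sN': "span N' = N'" unfolding N'_def
      by (simp add: span_eq_iff linear_subspace_kernel[OF matrix_vector_mul_linear])
    have "span N \<subset> span N'" unfolding sN sN' using sub bN bN' by blast
    then have "dim N < dim N'" by (rule dim_psubset)
    moreover have "dim N' \<le> CARD('n)" by (rule dim_subset_UNIV_cart)
    ultimately have "CARD('n) - dim {x. X' *v x = 0} < CARD('n) - dim {x. X *v x = 0}"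
      unfolding N_def N'_def by linarith
    then obtain K s' u' v' where svd': "is_svd X' K s' u' v'" using less by blast
    have fin: "finite K" and sp: "\<forall>k\<in>K. s' k > 0"
      and ou: "\<forall>k\<in>K. \<forall>l\<in>K. u' k \<bullet> u' l = (if k = l then 1 else 0)"
      and ov: "\<forall>k\<in>K. \<forall>l\<in>K. v' k \<bullet> v' l = (if k = l then 1 else 0)"
      and X': "X' = (\<Sum>k\<in>K. s' k *\<^sub>R outer (u' k) (v' k))"
      using svd' by (auto simp: is_svd_def)
    have ua: "u' l \<bullet> a = 0" if l: "l \<in> K" for l
    proof -
      have "a \<bullet> (X' *v v' l) = (\<Sum>k\<in>K. s' k * ((u' k \<bullet> a) * (v' k \<bullet> v' l)))"
        by (rule svd_apply[OF svd'])
      also have "\<dots> = (\<Sum>k\<in>K. if k = l then s' l * (u' l \<bullet> a) else 0)"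
        using ov l by (intro sum.cong refl) auto
      also have "\<dots> = s' l * (u' l \<bullet> a)" using fin l by simp
      finally have "s' l * (u' l \<bullet> a) = 0" using aX' by simp
      then show ?thesis using sp l by fastforce
    qed
    have vb: "v' l \<bullet> b = 0" if l: "l \<in> K" for l
    proof -
      have "u' l \<bullet> (X' *v b) = (\<Sum>k\<in>K. s' k * ((u' k \<bullet> u' l) * (v' k \<bullet> b)))"
        by (rule svd_apply[OF svd'])
      also have "\<dots> = (\<Sum>k\<in>K. if k = l then s' l * (v' l \<bullet> b) else 0)"
        using ou l by (intro sum.cong refl) auto
      also have "\<dots> = s' l * (v' l \<bullet> b)" using fin l by simp
      finally have "s' l * (v' l \<bullet> b) = 0" using X'b by simp
      then show ?thesis using sp l by fastforce
    qed
    obtain k0 :: nat where k0: "k0 \<notin> K" using ex_new_if_finite[OF infinite_UNIV_nat fin] by blast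
    define s2 where "s2 = s'(k0 := s)"
    define u2 where "u2 = u'(k0 := a)"
    define v2 where "v2 = v'(k0 := b)"
    have "is_svd X (insert k0 K) s2 u2 v2"
      unfolding is_svd_def
    proof (intro conjI ballI)
      show "finite (insert k0 K)" using fin by simp
    next
      fix k assume "k \<in> insert k0 K" then show "s2 k > 0" using sp spos by (auto simp: s2_def)
    next
      fix k l assume "k \<in> insert k0 K" "l \<in> insert k0 K"
      then show "u2 k \<bullet> u2 l = (if k = l then 1 else 0)"
        using ou ua aa k0 by (auto simp: u2_def inner_commute)
    next
      fix k l assume "k \<in> insert k0 K" "l \<in> insert k0 K"
      then show "v2 k \<bullet> v2 l = (if k = l then 1 else 0)"
        using ov vb bb k0 by (auto simp: v2_def inner_commute)
    next
      have "(\<Sum>k\<in>insert k0 K. s2 k *\<^sub>R outer (u2 k) (v2 k))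
          = s *\<^sub>R outer a b + (\<Sum>k\<in>K. s2 k *\<^sub>R outer (u2 k) (v2 k))"
        using fin k0 by (simp add: s2_def u2_def v2_def)
      also have "(\<Sum>k\<in>K. s2 k *\<^sub>R outer (u2 k) (v2 k)) = X'"
        unfolding X' using k0 by (intro sum.cong refl) (auto simp: s2_def u2_def v2_def)
      finally show "X = (\<Sum>k\<in>insert k0 K. s2 k *\<^sub>R outer (u2 k) (v2 k))"
        by (simp add: X'_def)
    qed
    then show ?thesis by blast
  qed
qed

lemma nuclear_eq: "nuclear_norm (X::real^'n^'m) = NN X"
proof -
  obtain K s u v where svd: "is_svd X K s u v" using svd_exists by blast
  show ?thesis unfolding nuclear_norm_def
  proof (rule the_equality)
    show "\<exists>K s u v. is_svd X K s u v \<and> NN X = sum s K" using svd svd_NN by blast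
  next
    fix r assume "\<exists>K s u v. is_svd X K s u v \<and> r = sum s K"
    then show "r = NN X" using svd_NN by metis
  qed
qed

lemma small_t:
  fixes D M :: real
  assumes "\<forall>t. 0 < t \<longrightarrow> t < 1 \<longrightarrow> - (t * M) \<le> D"
  shows "0 \<le> D"
proof (rule ccontr)
  assume D: "\<not> 0 \<le> D"
  show False
  proof (cases "M \<le> 0")
    case True
    have "- ((1/2) * M) \<le> D" using assms[rule_format, of "1/2"] by simp
    then show False using True D by linarith
  next
    case False
    define t where "t = min (1/2) (- D / (2 * M))"
    have t0: "0 < t" using D False by (simp add: t_def divide_neg_pos)
    have t1: "t < 1" by (simp add: t_def)
    have "t \<le> - D / (2 * M)" by (simp add: t_def)
    then have "t * M \<le> - D / 2" using False by (simp add: field_simps)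
    moreover have "- (t * M) \<le> D" using assms t0 t1 by auto
    ultimately show False using D by linarith
  qed
qed

lemma fo:
  fixes \<phi> q :: "'a::real_vector \<Rightarrow> real"
  assumes cv: "convex_on UNIV \<phi>" and mn: "\<forall>y. \<phi> x + q x \<le> \<phi> y + q y"
    and qb: "\<forall>t. 0 < t \<longrightarrow> t < 1 \<longrightarrow> q (x + t *\<^sub>R (y - x)) \<le> q x - t * L + t^2 * M"
  shows "\<phi> x + L \<le> \<phi> y"
proof -
  have "- (t * M) \<le> \<phi> y - \<phi> x - L" if t: "0 < t" "t < 1" for t
  proof -
    have eq: "x + t *\<^sub>R (y - x) = (1 - t) *\<^sub>R x + t *\<^sub>R y" by (simp add: algebra_simps)
    have c: "\<phi> (x + t *\<^sub>R (y - x)) \<le> (1 - t) * \<phi> x + t * \<phi> y"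
      unfolding eq using t by (intro convex_onD[OF cv]) auto
    have "\<phi> x + q x \<le> \<phi> (x + t *\<^sub>R (y - x)) + q (x + t *\<^sub>R (y - x))" using mn by blast
    then have "t * \<phi> x \<le> t * \<phi> y - t * L + t^2 * M" using c qb t by (auto simp: algebra_simps)
    then have "t * (\<phi> x) \<le> t * (\<phi> y - L + t * M)" by (simp add: algebra_simps power2_eq_square)
    then have "\<phi> x \<le> \<phi> y - L + t * M" using t by simp
    then show ?thesis by linarith
  qed
  then have "0 \<le> \<phi> y - \<phi> x - L" by (intro small_t) auto
  then show ?thesis by linarith
qed

lemma quad:
  fixes c x d :: "'a::real_inner"
  shows "norm (c - (x + t *\<^sub>R d))^2 = norm (c - x)^2 - 2*t*((c - x) \<bullet> d) + t^2 * norm d^2"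
  unfolding power2_norm_eq_inner
  by (simp add: inner_diff_left inner_diff_right inner_add_left
      inner_add_right algebra_simps power2_eq_square inner_commute)

lemma fo_quad:
  fixes \<phi> :: "'a::real_inner \<Rightarrow> real"
  assumes cv: "convex_on UNIV \<phi>" and mn: "\<forall>y. \<phi> x + k * norm (c - x)^2 \<le> \<phi> y + k * norm (c - y)^2"
  shows "\<phi> x + 2 * k * ((c - x) \<bullet> (y - x)) \<le> \<phi> y"
proof (rule fo[OF cv, where q = "\<lambda>y. k * norm (c - y)^2" and M = "k * norm (y - x)^2"])
  show "\<forall>y. \<phi> x + k * (norm (c - x))\<^sup>2 \<le> \<phi> y + k * (norm (c - y))\<^sup>2" using mn by blast
  show "\<forall>t. 0 < t \<longrightarrow> t < 1 \<longrightarrow> k * (norm (c - (x + t *\<^sub>R (y - x))))\<^sup>2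
      \<le> k * (norm (c - x))\<^sup>2 - t * (2 * k * ((c - x) \<bullet> (y - x))) + t\<^sup>2 * (k * (norm (y - x))\<^sup>2)"
  proof (intro allI impI)
    fix t :: real
    show "k * (norm (c - (x + t *\<^sub>R (y - x))))\<^sup>2
      \<le> k * (norm (c - x))\<^sup>2 - t * (2 * k * ((c - x) \<bullet> (y - x))) + t\<^sup>2 * (k * (norm (y - x))\<^sup>2)"
      by (subst quad) (simp add: algebra_simps)
  qed
qed

lemma exists_min:
  fixes h :: "'a::euclidean_space \<Rightarrow> real"
  assumes ch: "continuous_on UNIV h" and R: "\<forall>x. h x \<le> h x0 \<longrightarrow> norm x \<le> R"
  shows "\<exists>x. \<forall>y. h x \<le> h y"
proof -
  have x0: "x0 \<in> cball 0 R" using R by auto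
  obtain x where x: "x \<in> cball 0 R" and xm: "\<forall>y\<in>cball 0 R. h x \<le> h y"
    using continuous_attains_inf[of "cball 0 R" h] x0 continuous_on_subset[OF ch]
    by (metis compact_cball empty_iff subset_UNIV)
  have "h x \<le> h y" for y
  proof (cases "y \<in> cball 0 R")
    case True then show ?thesis using xm by blast
  next
    case False
    then have "\<not> h y \<le> h x0" using R by auto
    moreover have "h x \<le> h x0" using xm x0 by blast
    ultimately show ?thesis by linarith
  qed
  then show ?thesis by blast
qed

lemma lip_cont:
  fixes h :: "'a::metric_space \<Rightarrow> 'b::metric_space"
  assumes "\<forall>x y. dist (h x) (h y) \<le> C * dist x y" "0 \<le> C"
  shows "continuous_on S h"
  by (rule lipschitz_on_continuous_on[of C]) (use assms in \<open>auto intro: lipschitz_onI\<close>)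

lemma NN_cont: "continuous_on S (NN :: real^'n^'m \<Rightarrow> real)"
  by (rule lip_cont[of _ "real CARD('m) * real CARD('n)"]) (auto simp: dist_real_def dist_norm NN_lip)

lemma sq_le_bound: fixes x a :: real assumes "0 \<le> x" "x^2 \<le> a" shows "x \<le> 1 + a"
proof (cases "x \<le> 1")
  case True then show ?thesis using assms by (smt (verit) zero_le_power2)
next
  case False then have "x \<le> x^2" by (simp add: power2_eq_square)
  then show ?thesis using assms by linarith
qed

lemma svt_char:
  fixes c :: "real^'n^'m"
  assumes mu: "\<mu> > 0"
  shows "NN (svt \<mu> c) + (1/\<mu>) * ((c - svt \<mu> c) \<bullet> (Z - svt \<mu> c)) \<le> NN Z"
proof -
  define h where "h Y = NN Y + 1 / (2*\<mu>) * (norm (Y - c))^2" for Y :: "real^'n^'m"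
  have ch: "continuous_on UNIV h" unfolding h_def by (intro continuous_intros NN_cont)
  have R: "\<forall>Y. h Y \<le> h c \<longrightarrow> norm Y \<le> norm c + (1 + 2*\<mu> * NN c)"
  proof (intro allI impI)
    fix Y assume "h Y \<le> h c"
    then have "1 / (2*\<mu>) * (norm (Y - c))^2 \<le> NN c" using NN_nonneg[of Y] by (simp add: h_def)
    then have "(norm (Y - c))^2 \<le> 2*\<mu> * NN c" using mu by (simp add: field_simps)
    then have "norm (Y - c) \<le> 1 + 2*\<mu> * NN c" by (intro sq_le_bound) auto
    then show "norm Y \<le> norm c + (1 + 2*\<mu> * NN c)" using norm_triangle_sub[of Y c] by linarith
  qed
  obtain Y0 where Y0: "\<forall>Y. h Y0 \<le> h Y" using exists_min[OF ch R] by blast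
  have char: "NN Y + (1/\<mu>) * ((c - Y) \<bullet> (Z' - Y)) \<le> NN Z'"
    if Ym: "\<forall>Y'. h Y \<le> h Y'" for Y Z'
  proof -
    have "NN Y + 2 * (1/(2*\<mu>)) * ((c - Y) \<bullet> (Z' - Y)) \<le> NN Z'"
      using Ym by (intro fo_quad[OF NN_convex]) (simp add: h_def norm_minus_commute)
    then show ?thesis using mu by simp
  qed
  have "svt \<mu> c = Y0"
    unfolding svt_def nuclear_eq
  proof (rule the_equality)
    show "\<forall>Z. NN Y0 + 1 / (2 * \<mu>) * (norm (Y0 - c))\<^sup>2 \<le> NN Z + 1 / (2 * \<mu>) * (norm (Z - c))\<^sup>2"
      using Y0 by (simp add: h_def)
  next
    fix Y1 assume "\<forall>Z. NN Y1 + 1 / (2 * \<mu>) * (norm (Y1 - c))\<^sup>2 \<le> NN Z + 1 / (2 * \<mu>) * (norm (Z - c))\<^sup>2"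
    then have Y1: "\<forall>Y'. h Y1 \<le> h Y'" by (simp add: h_def)
    have a: "NN Y1 + (1/\<mu>) * ((c - Y1) \<bullet> (Y0 - Y1)) \<le> NN Y0" by (rule char[OF Y1])
    have b: "NN Y0 + (1/\<mu>) * ((c - Y0) \<bullet> (Y1 - Y0)) \<le> NN Y1" by (rule char[OF Y0])
    have "(c - Y1) \<bullet> (Y0 - Y1) + (c - Y0) \<bullet> (Y1 - Y0) = (Y1 - Y0) \<bullet> (Y1 - Y0)"
      by (simp add: inner_diff_left inner_diff_right inner_commute algebra_simps)
    then have "(1/\<mu>) * ((Y1 - Y0) \<bullet> (Y1 - Y0)) \<le> 0" using a b by (simp add: algebra_simps)
    then have "(Y1 - Y0) \<bullet> (Y1 - Y0) \<le> 0" using mu by (auto simp: divide_le_0_iff)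
    then show "Y1 = Y0" by (metis inner_gt_zero_iff not_less right_minus_eq)
  qed
  then show ?thesis using char[OF Y0] by simp
qed

lemma svt_nonexp:
  fixes a b :: "real^'n^'m"
  assumes mu: "\<mu> > 0"
  shows "norm (svt \<mu> a - svt \<mu> b) \<le> norm (a - b)"
proof -
  define A where "A = svt \<mu> a"
  define B where "B = svt \<mu> b"
  have 1: "NN A + (1/\<mu>) * ((a - A) \<bullet> (B - A)) \<le> NN B" unfolding A_def B_def by (rule svt_char[OF mu])
  have 2: "NN B + (1/\<mu>) * ((b - B) \<bullet> (A - B)) \<le> NN A" unfolding A_def B_def by (rule svt_char[OF mu])
  have "(1/\<mu>) * ((a - A) \<bullet> (B - A) + (b - B) \<bullet> (A - B)) \<le> 0" using 1 2 by (simp add: algebra_simps)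
  then have "(a - A) \<bullet> (B - A) + (b - B) \<bullet> (A - B) \<le> 0" using mu by (auto simp: divide_le_0_iff)
  moreover have "(a - A) \<bullet> (B - A) + (b - B) \<bullet> (A - B) = (A - B) \<bullet> (A - B) - (a - b) \<bullet> (A - B)"
    by (simp add: inner_diff_left inner_diff_right inner_commute algebra_simps)
  ultimately have "(A - B) \<bullet> (A - B) \<le> (a - b) \<bullet> (A - B)" by linarith
  also have "\<dots> \<le> norm (a - b) * norm (A - B)" by (rule norm_cauchy_schwarz)
  finally have "norm (A - B) * norm (A - B) \<le> norm (a - b) * norm (A - B)"
    by (simp add: power2_norm_eq_inner[symmetric] power2_eq_square)
  then show ?thesis unfolding A_def B_def
    by (metis mult_right_le_imp_le norm_ge_zero order_le_less)
qed

lemma svt_cont: "\<mu> > 0 \<Longrightarrow> continuous_on S (svt \<mu> :: real^'n^'m \<Rightarrow> _)"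
  by (rule lip_cont[of _ 1]) (auto simp: dist_norm svt_nonexp)

lemma soft1:
  fixes x e' \<mu> :: real
  assumes mu: "0 \<le> \<mu>"
  defines "e \<equiv> sgn x * max (\<bar>x\<bar> - \<mu>) 0"
  shows "\<mu> * \<bar>e\<bar> + (x - e) * (e' - e) \<le> \<mu> * \<bar>e'\<bar>"
proof (cases "\<bar>x\<bar> \<le> \<mu>")
  case True
  then have e: "e = 0" by (simp add: e_def)
  have "x * e' \<le> \<bar>x\<bar> * \<bar>e'\<bar>" by (metis abs_ge_self abs_mult)
  also have "\<dots> \<le> \<mu> * \<bar>e'\<bar>" using True by (simp add: mult_right_mono)
  finally show ?thesis by (simp add: e)
next
  case False
  show ?thesis
  proof (cases "x > 0")
    case True
    then have e: "e = x - \<mu>" using False by (simp add: e_def)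
    have "\<mu> * e' \<le> \<mu> * \<bar>e'\<bar>" using mu by (simp add: mult_left_mono)
    have xe: "x - e = \<mu>" and ae: "\<bar>e\<bar> = e" using e False True by auto
    have "\<mu> * \<bar>e\<bar> + (x - e) * (e' - e) = \<mu> * e'" unfolding xe ae by (simp add: algebra_simps)
    then show ?thesis using \<open>\<mu> * e' \<le> \<mu> * \<bar>e'\<bar>\<close> by linarith
  next
    case f2: False
    then have e: "e = x + \<mu>" using False mu by (cases "x = 0") (auto simp: e_def)
    have "- (\<mu> * e') \<le> \<mu> * \<bar>e'\<bar>" using mu by (metis abs_ge_minus_self minus_mult_right mult_left_mono)
    have xe: "x - e = - \<mu>" and ae: "\<bar>e\<bar> = - e" using e False f2 by auto
    have "\<mu> * \<bar>e\<bar> + (x - e) * (e' - e) = - (\<mu> * e')" unfolding xe ae by (simp add: algebra_simps)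
    then show ?thesis using \<open>- (\<mu> * e') \<le> \<mu> * \<bar>e'\<bar>\<close> by linarith
  qed
qed

lemma soft_nth: "soft \<mu> X $ i $ j = sgn (X$i$j) * max (\<bar>X$i$j\<bar> - \<mu>) 0"
  by (simp add: soft_def)

lemma soft_sub:
  fixes c E' :: "real^'n^'m"
  assumes mu: "0 \<le> \<mu>"
  shows "\<mu> * l1_norm (soft \<mu> c) + (c - soft \<mu> c) \<bullet> (E' - soft \<mu> c) \<le> \<mu> * l1_norm E'"
proof -
  have "\<mu> * l1_norm (soft \<mu> c) + (c - soft \<mu> c) \<bullet> (E' - soft \<mu> c)
      = (\<Sum>i\<in>UNIV. \<Sum>j\<in>UNIV. \<mu> * \<bar>soft \<mu> c$i$j\<bar> + (c$i$j - soft \<mu> c$i$j) * (E'$i$j - soft \<mu> c$i$j))"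
    by (simp add: l1_norm_def inner_mat sum_distrib_left sum.distrib)
  also have "\<dots> \<le> (\<Sum>i\<in>UNIV. \<Sum>j\<in>UNIV. \<mu> * \<bar>E'$i$j\<bar>)"
    unfolding soft_nth by (intro sum_mono soft1 mu)
  also have "\<dots> = \<mu> * l1_norm E'" by (simp add: l1_norm_def sum_distrib_left)
  finally show ?thesis .
qed

lemma soft_alt: "0 \<le> \<mu> \<Longrightarrow> soft \<mu> X = (\<chi> i j. max (X$i$j - \<mu>) 0 + min (X$i$j + \<mu>) 0)"
  unfolding soft_def by (auto simp: vec_eq_iff sgn_if max_def min_def)

lemma soft_cont: assumes "0 \<le> \<mu>" shows "continuous_on S (soft \<mu> :: real^'n^'m \<Rightarrow> _)"
proof -
  have eq: "soft \<mu> = (\<lambda>X::real^'n^'m. \<chi> i j. max (X$i$j - \<mu>) 0 + min (X$i$j + \<mu>) 0)"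
    by (rule ext) (rule soft_alt[OF assms])
  show ?thesis unfolding eq by (intro continuous_on_vec_lambda continuous_intros)
qed

lemma l1_tri: "l1_norm (X + Y) \<le> l1_norm X + l1_norm Y"
  unfolding l1_norm_def by (simp add: sum.distrib[symmetric] sum_mono abs_triangle_ineq)

lemma l1_scale: "l1_norm (c *\<^sub>R X) = \<bar>c\<bar> * l1_norm X"
  unfolding l1_norm_def by (simp add: sum_distrib_left abs_mult)

lemma l1_convex: "convex_on UNIV l1_norm"
proof (rule convex_onI)
  fix t :: real and x y :: "real^'n^'m" assume t: "0 < t" "t < 1"
  show "l1_norm ((1 - t) *\<^sub>R x + t *\<^sub>R y) \<le> (1 - t) * l1_norm x + t * l1_norm y"
    using l1_tri[of "(1 - t) *\<^sub>R x" "t *\<^sub>R y"] t by (simp add: l1_scale)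
qed simp

lemma l1_lip: "\<bar>l1_norm X - l1_norm (Y::real^'n^'m)\<bar> \<le> real CARD('m) * real CARD('n) * norm (X - Y)"
proof -
  have a: "l1_norm X \<le> l1_norm Y + l1_norm (X - Y)" using l1_tri[of Y "X - Y"] by simp
  have b: "l1_norm Y \<le> l1_norm X + l1_norm (Y - X)" using l1_tri[of X "Y - X"] by simp
  have c: "l1_norm (Y - X) = l1_norm (X - Y)" using l1_scale[of "-1" "X - Y"] by simp
  show ?thesis using a b c l1_le[of "X - Y"] by linarith
qed

lemma l1_cont: "continuous_on S (l1_norm :: real^'n^'m \<Rightarrow> real)"
  by (rule lip_cont[of _ "real CARD('m) * real CARD('n)"]) (auto simp: dist_real_def dist_norm l1_lip)

lemma norm_le_l1: "norm (X::real^'n^'m) \<le> l1_norm X"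
proof -
  have "norm X \<le> (\<Sum>i\<in>UNIV. norm (X$i))" unfolding norm_vec_def by (rule L2_set_le_sum) simp
  also have "\<dots> \<le> l1_norm X" unfolding l1_norm_def by (intro sum_mono norm_le_l1_cart)
  finally show ?thesis .
qed

lemma km_step:
  fixes F :: "'a::real_inner \<Rightarrow> 'a"
  assumes g: "\<forall>x. 0 \<le> (F x - q) \<bullet> (x - F x)" and r: "0 \<le> \<rho>"
  shows "(norm (x + \<rho> *\<^sub>R (F x - x) - q))^2 \<le> (norm (x - q))^2 - \<rho> * (2 - \<rho>) * (norm (x - F x))^2"
proof -
  define d where "d = x - F x"
  define e where "e = x - q"
  have eq: "x + \<rho> *\<^sub>R (F x - x) - q = e - \<rho> *\<^sub>R d" by (simp add: d_def e_def algebra_simps)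
  have ed: "e \<bullet> d = d \<bullet> d + (F x - q) \<bullet> d"
    by (simp add: d_def e_def inner_diff_left inner_diff_right algebra_simps)
  have "0 \<le> (F x - q) \<bullet> d" using g by (simp add: d_def)
  then have ed2: "d \<bullet> d \<le> e \<bullet> d" using ed by linarith
  have "(norm (e - \<rho> *\<^sub>R d))^2 = e \<bullet> e - 2 * \<rho> * (e \<bullet> d) + \<rho>^2 * (d \<bullet> d)"
    unfolding power2_norm_eq_inner
    by (simp add: inner_diff_left inner_diff_right inner_commute algebra_simps power2_eq_square)
  also have "\<dots> \<le> e \<bullet> e - 2 * \<rho> * (d \<bullet> d) + \<rho>^2 * (d \<bullet> d)"
    using mult_left_mono[OF ed2 r] by linarith
  also have "\<dots> = (norm (x - q))^2 - \<rho> * (2 - \<rho>) * (norm (x - F x))^2"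
    unfolding d_def[symmetric] e_def[symmetric] power2_norm_eq_inner by (simp add: algebra_simps power2_eq_square)
  finally show ?thesis using eq by simp
qed

lemma km:
  fixes F :: "'a::euclidean_space \<Rightarrow> 'a" and s :: "nat \<Rightarrow> 'a"
  assumes cF: "continuous_on UNIV F"
    and it: "\<And>k. s (Suc k) = s k + \<rho> *\<^sub>R (F (s k) - s k)"
    and rho: "0 < \<rho>" "\<rho> < 2"
    and good0: "\<exists>q. \<forall>x. 0 \<le> (F x - q) \<bullet> (x - F x)"
    and goodfix: "\<And>q. F q = q \<Longrightarrow> \<forall>x. 0 \<le> (F x - q) \<bullet> (x - F x)"
  shows "\<exists>q. s \<longlonglongrightarrow> q \<and> F q = q"
proof -
  define c where "c = \<rho> * (2 - \<rho>)"
  have c0: "c > 0" using rho by (simp add: c_def)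
  have fej: "(norm (s (Suc k) - q))^2 \<le> (norm (s k - q))^2 - c * (norm (s k - F (s k)))^2"
    if "\<forall>x. 0 \<le> (F x - q) \<bullet> (x - F x)" for q k
    unfolding it c_def using km_step[OF that, of \<rho> "s k"] rho by simp
  have dec: "norm (s (Suc k) - q) \<le> norm (s k - q)"
    if "\<forall>x. 0 \<le> (F x - q) \<bullet> (x - F x)" for q k
  proof -
    have "(norm (s (Suc k) - q))^2 \<le> (norm (s k - q))^2"
      using fej[OF that, of k] c0 by (smt (verit) mult_nonneg_nonneg zero_le_power2)
    then show ?thesis by (simp add: power_mono_iff)
  qed
  obtain q0 where g0: "\<forall>x. 0 \<le> (F x - q0) \<bullet> (x - F x)" using good0 by blast
  have bnd: "norm (s k - q0) \<le> norm (s 0 - q0)" for k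
  proof (induction k)
    case (Suc k) then show ?case using dec[OF g0, of k] by linarith
  qed simp
  have tel: "c * (\<Sum>k<n. (norm (s k - F (s k)))^2) \<le> (norm (s 0 - q0))^2 - (norm (s n - q0))^2" for n
  proof (induction n)
    case (Suc n) then show ?case using fej[OF g0, of n] by (simp add: algebra_simps)
  qed simp
  have summ: "summable (\<lambda>k. (norm (s k - F (s k)))^2)"
  proof (rule summableI_nonneg_bounded)
    fix n
    have "c * (\<Sum>k<n. (norm (s k - F (s k)))^2) \<le> (norm (s 0 - q0))^2"
      using tel[of n] by (smt (verit) zero_le_power2)
    then show "(\<Sum>k<n. (norm (s k - F (s k)))^2) \<le> (norm (s 0 - q0))^2 / c"
      using c0 by (simp add: field_simps)
  qed simp
  then have "(\<lambda>k. (norm (s k - F (s k)))^2) \<longlonglongrightarrow> 0" by (rule summable_LIMSEQ_zero)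
  then have "(\<lambda>k. norm (s k - F (s k))) \<longlonglongrightarrow> 0"
    using tendsto_real_sqrt[of "\<lambda>k. (norm (s k - F (s k)))^2" 0] by simp
  then have d0: "(\<lambda>k. s k - F (s k)) \<longlonglongrightarrow> 0" by (simp add: tendsto_norm_zero_iff)
  have "bounded (range s)"
    unfolding bounded_iff
  proof (intro exI ballI)
    fix x assume "x \<in> range s"
    then obtain k where "x = s k" by blast
    then show "norm x \<le> norm q0 + norm (s 0 - q0)"
      using bnd[of k] norm_triangle_sub[of "s k" q0] by (smt (verit) norm_minus_commute)
  qed
  then obtain l r where r: "strict_mono r" and sl: "(s \<circ> r) \<longlonglongrightarrow> l"
    using bounded_imp_convergent_subsequence by blast
  have "(\<lambda>j. s (r j) - F (s (r j))) \<longlonglongrightarrow> l - F l"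
  proof (intro tendsto_intros)
    show "(\<lambda>j. s (r j)) \<longlonglongrightarrow> l" using sl by (simp add: o_def)
    show "(\<lambda>j. F (s (r j))) \<longlonglongrightarrow> F l"
      using continuous_on_tendsto_compose[OF cF, of "\<lambda>j. s (r j)" l sequentially] sl
      by (simp add: o_def)
  qed
  moreover have "(\<lambda>j. s (r j) - F (s (r j))) \<longlonglongrightarrow> 0"
    using LIMSEQ_subseq_LIMSEQ[OF d0 r] by (simp add: o_def)
  ultimately have "l - F l = 0" using LIMSEQ_unique by blast
  then have fl: "F l = l" by simp
  note gl = goodfix[OF fl]
  have "decseq (\<lambda>k. norm (s k - l))" by (rule decseq_SucI) (rule dec[OF gl])
  then obtain L where L: "(\<lambda>k. norm (s k - l)) \<longlonglongrightarrow> L"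
    using decseq_convergent[of "\<lambda>k. norm (s k - l)" 0] by auto
  have "(\<lambda>j. norm (s (r j) - l)) \<longlonglongrightarrow> L" using LIMSEQ_subseq_LIMSEQ[OF L r] by (simp add: o_def)
  moreover have "(\<lambda>j. norm (s (r j) - l)) \<longlonglongrightarrow> 0"
  proof -
    have "(\<lambda>j. s (r j)) \<longlonglongrightarrow> l" using sl by (simp add: o_def)
    then have "(\<lambda>j. s (r j) - l) \<longlonglongrightarrow> 0" by (simp add: LIM_zero)
    then show ?thesis by (simp add: tendsto_norm_zero_iff)
  qed
  ultimately have "L = 0" using LIMSEQ_unique by blast
  then have "(\<lambda>k. s k - l) \<longlonglongrightarrow> 0" using L by (simp add: tendsto_norm_zero_iff)
  then have "s \<longlonglongrightarrow> l" by (simp add: LIM_zero_iff)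
  then show ?thesis using fl by blast
qed

lemma comb:
  fixes a1 a2 a3 a4 a5 a6 a7 w :: real
  assumes "w > 0" "0 \<le> a1 + w * a2" "0 \<le> a3 + w * a4" "a1 + a3 = - a5" "a2 = a6" "a7 = a4"
  shows "0 \<le> a7 - (1/w) * a5 + a6"
proof -
  have "w * (a7 - (1/w) * a5 + a6) = w * a4 - a5 + w * a2"
    using assms(1,5,6) by (simp add: field_simps)
  then have "0 \<le> w * (a7 - (1/w) * a5 + a6)" using assms by linarith
  then show ?thesis using assms by (simp add: zero_le_mult_iff)
qed

lemma lin_cont: fixes L :: "'a::euclidean_space \<Rightarrow> 'b::real_normed_vector" shows "linear L \<Longrightarrow> continuous_on S f \<Longrightarrow> continuous_on S (\<lambda>x. L (f x))"
  by (rule bounded_linear.continuous_on) (auto simp: linear_conv_bounded_linear)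

lemma lin_tendsto: fixes L :: "'a::euclidean_space \<Rightarrow> 'b::real_normed_vector" shows "linear L \<Longrightarrow> (f \<longlongrightarrow> a) F \<Longrightarrow> ((\<lambda>x. L (f x)) \<longlongrightarrow> L a) F"
  by (rule bounded_linear.tendsto) (auto simp: linear_conv_bounded_linear)

lemma soft_cont2: "0 \<le> \<mu> \<Longrightarrow> continuous_on S f \<Longrightarrow> continuous_on S (\<lambda>x. soft \<mu> (f x))"
  by (rule continuous_on_compose2[OF soft_cont]) auto

lemma svt_cont2: "0 < \<mu> \<Longrightarrow> continuous_on S f \<Longrightarrow> continuous_on S (\<lambda>x. svt \<mu> (f x))"
  by (rule continuous_on_compose2[OF svt_cont]) auto

locale alg =
  fixes B :: "real^'n^'m" and J :: "real^'p \<Rightarrow> real^'n^'m" and lam \<sigma> :: real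
  assumes lin: "linear J" and binv: "bij (adjoint J \<circ> J)" and lam: "lam > 0" and sig: "\<sigma> > 0"
begin

definition "H = inv (adjoint J \<circ> J)"
definition "Q a = J (H (adjoint J a))"

lemma linA: "linear (adjoint J)" using lin by (rule adjoint_linear)
lemma linG: "linear (adjoint J \<circ> J)" using lin linA by (rule linear_compose)
lemma linH: "linear H"
  unfolding H_def using linG binv by (intro inj_linear_imp_inv_linear) (auto simp: bij_def)
lemma GH: "adjoint J (J (H y)) = y"
  using binv unfolding H_def by (metis bij_def comp_apply surj_f_inv_f)
lemma HG: "H (adjoint J (J x)) = x"
  using binv unfolding H_def by (metis bij_def comp_apply inv_f_f)
lemma adj: "x \<bullet> adjoint J y = J x \<bullet> y" using lin by (rule adjoint_works)
lemma linQ: "linear Q"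
proof -
  have "linear (J \<circ> H \<circ> adjoint J)" using lin linH linA by (intro linear_compose)
  then show ?thesis by (simp add: Q_def[abs_def] o_def)
qed
lemma JQ: "adjoint J (Q a) = adjoint J a" by (simp add: Q_def GH)
lemma QQ: "Q a \<bullet> b = Q a \<bullet> Q b"
proof -
  have "Q a \<bullet> Q b = H (adjoint J a) \<bullet> adjoint J (Q b)" by (simp add: Q_def adj)
  also have "\<dots> = H (adjoint J a) \<bullet> adjoint J b" by (simp add: JQ)
  also have "\<dots> = Q a \<bullet> b" by (simp add: Q_def adj)
  finally show ?thesis by simp
qed
lemma QQQ: "Q (Q a) = Q a" by (simp add: Q_def GH)

definition "cc z = B - z"
definition "thF z p = - H (adjoint J (cc z - p))"
definition "EF z p = soft (lam/\<sigma>) (cc z + J (thF z p))"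
definition "tF z p = - H (adjoint J (cc z - EF z p))"
definition "YF z p = \<sigma> *\<^sub>R (cc z + J (tF z p) - EF z p)"
definition "XF z p = svt (1/\<sigma>) (B + J (tF z p) - EF z p + (1/\<sigma>) *\<^sub>R YF z p)"
definition "FF s = (XF (fst s) (snd s) - (1/\<sigma>) *\<^sub>R YF (fst s) (snd s), Q (EF (fst s) (snd s)))"

definition "kkt X t E Y \<longleftrightarrow> B + J t = X + E \<and> adjoint J Y = 0
   \<and> (\<forall>X'. NN X + Y \<bullet> (X' - X) \<le> NN X') \<and> (\<forall>E'. lam * l1_norm E + Y \<bullet> (E' - E) \<le> lam * l1_norm E')"

lemma kkt_opt: assumes "kkt X t E Y" shows "optimal_P lam B J X t E"
  unfolding optimal_P_def nuclear_eq
proof (intro conjI allI impI)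
  show "B + J t = X + E" using assms by (simp add: kkt_def)
  fix X' t' E' assume f: "B + J t' = X' + E'"
  have a: "NN X + Y \<bullet> (X' - X) \<le> NN X'" and b: "lam * l1_norm E + Y \<bullet> (E' - E) \<le> lam * l1_norm E'"
    and c: "adjoint J Y = 0" and d: "B + J t = X + E" using assms by (auto simp: kkt_def)
  have j1: "J t' = X' + E' - B" using f by (metis add_diff_cancel_left')
  have j2: "J t = X + E - B" using d by (metis add_diff_cancel_left')
  have e: "(X' - X) + (E' - E) = J (t' - t)"
    by (simp add: linear_diff[OF lin] j1 j2 algebra_simps)
  have "Y \<bullet> (X' - X) + Y \<bullet> (E' - E) = Y \<bullet> ((X' - X) + (E' - E))"
    by (simp only: inner_add_right)
  also have "\<dots> = J (t' - t) \<bullet> Y" by (simp only: e inner_commute)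
  also have "\<dots> = 0" using c by (simp only: adj[symmetric] inner_zero_right)
  finally show "NN X + lam * l1_norm E \<le> NN X' + lam * l1_norm E'" using a b by linarith
qed

lemma F1: "adjoint J (YF z p) = 0"
proof -
  have a: "adjoint J (J (tF z p)) = - adjoint J (cc z - EF z p)"
    by (simp add: tF_def linear_neg[OF lin] linear_neg[OF linA] GH)
  have "YF z p = \<sigma> *\<^sub>R ((cc z - EF z p) + J (tF z p))" by (simp add: YF_def algebra_simps)
  then show ?thesis by (simp add: linear_scale[OF linA] linear_add[OF linA] a)
qed

lemma hq: "J (thF z p) - J (tF z p) = Q (p - EF z p)"
proof -
  have "J (thF z p) - J (tF z p) = J (H (adjoint J (cc z - EF z p)) - H (adjoint J (cc z - p)))"
    by (simp add: thF_def tF_def linear_neg[OF lin] linear_diff[OF lin])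
  also have "\<dots> = J (H (adjoint J (cc z - EF z p) - adjoint J (cc z - p)))"
    by (simp add: linear_diff[OF linH])
  also have "adjoint J (cc z - EF z p) - adjoint J (cc z - p) = adjoint J (p - EF z p)"
    by (simp add: linear_diff[OF linA, symmetric])
  finally show ?thesis by (simp add: Q_def)
qed

lemma e1: "B + J (tF z p) - EF z p = z + (1/\<sigma>) *\<^sub>R YF z p"
  using sig by (simp add: YF_def cc_def algebra_simps)

lemma F2: "lam * l1_norm (EF z p) + (YF z p + \<sigma> *\<^sub>R Q (p - EF z p)) \<bullet> (E' - EF z p) \<le> lam * l1_norm E'"
proof -
  define c where "c = cc z + J (thF z p)"
  have E: "EF z p = soft (lam/\<sigma>) c" by (simp add: EF_def c_def)
  have "(lam/\<sigma>) * l1_norm (EF z p) + (c - EF z p) \<bullet> (E' - EF z p) \<le> (lam/\<sigma>) * l1_norm E'"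
    unfolding E using lam sig by (intro soft_sub) auto
  then have "\<sigma> * ((lam/\<sigma>) * l1_norm (EF z p) + (c - EF z p) \<bullet> (E' - EF z p)) \<le> \<sigma> * ((lam/\<sigma>) * l1_norm E')"
    using sig by (intro mult_left_mono) auto
  then have "lam * l1_norm (EF z p) + (\<sigma> *\<^sub>R (c - EF z p)) \<bullet> (E' - EF z p) \<le> lam * l1_norm E'"
    using sig by (simp add: algebra_simps)
  moreover have "\<sigma> *\<^sub>R (c - EF z p) = YF z p + \<sigma> *\<^sub>R Q (p - EF z p)"
  proof -
    have cq: "c - EF z p = (cc z + J (tF z p) - EF z p) + Q (p - EF z p)"
      using hq[of z p] by (simp add: c_def algebra_simps)
    show ?thesis by (simp only: cq scaleR_add_right YF_def)
  qed
  ultimately show ?thesis by simp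
qed

lemma F3: "NN (XF z p) + \<sigma> * ((B + J (tF z p) - EF z p + (1/\<sigma>) *\<^sub>R YF z p - XF z p) \<bullet> (Z - XF z p)) \<le> NN Z"
  using svt_char[of "1/\<sigma>" "B + J (tF z p) - EF z p + (1/\<sigma>) *\<^sub>R YF z p" Z] sig
  by (simp add: XF_def)

lemma good:
  assumes k: "kkt Xs ts Es Ys"
  shows "0 \<le> (FF s - (Xs - (1/\<sigma>) *\<^sub>R Ys, Q Es)) \<bullet> (s - FF s)"
proof -
  obtain z p where s: "s = (z, p)" by fastforce
  define E where "E = EF z p"
  define t where "t = tF z p"
  define Y where "Y = YF z p"
  define X where "X = XF z p"
  define r where "r = z - (X - (1/\<sigma>) *\<^sub>R Y)"
  have ks: "B + J ts = Xs + Es" "adjoint J Ys = 0"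
    "\<And>X'. NN Xs + Ys \<bullet> (X' - Xs) \<le> NN X'" "\<And>E'. lam * l1_norm Es + Ys \<bullet> (E' - Es) \<le> lam * l1_norm E'"
    using k by (auto simp: kkt_def)
  have i1: "lam * l1_norm E + (Y + \<sigma> *\<^sub>R Q (p - E)) \<bullet> (Es - E) \<le> lam * l1_norm Es"
    unfolding E_def Y_def by (rule F2)
  have i4: "lam * l1_norm Es + Ys \<bullet> (E - Es) \<le> lam * l1_norm E" by (rule ks(4))
  have w: "B + J t - E + (1/\<sigma>) *\<^sub>R Y - X = r + (1/\<sigma>) *\<^sub>R Y"
    using e1[of z p] by (simp add: r_def E_def t_def Y_def X_def algebra_simps)
  have "NN X + \<sigma> * ((B + J t - E + (1/\<sigma>) *\<^sub>R Y - X) \<bullet> (Xs - X)) \<le> NN Xs"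
    unfolding X_def t_def E_def Y_def by (rule F3)
  then have i2: "NN X + \<sigma> * ((r + (1/\<sigma>) *\<^sub>R Y) \<bullet> (Xs - X)) \<le> NN Xs"
    by (simp only: w)
  have i3: "NN Xs + Ys \<bullet> (X - Xs) \<le> NN X" by (rule ks(3))
  have A1: "0 \<le> (Y - Ys) \<bullet> (E - Es) + \<sigma> * (Q (p - E) \<bullet> (E - Es))"
  proof -
    have "(Y + \<sigma> *\<^sub>R Q (p - E)) \<bullet> (Es - E) + Ys \<bullet> (E - Es) \<le> 0" using i1 i4 by linarith
    moreover have "(Y + \<sigma> *\<^sub>R Q (p - E)) \<bullet> (Es - E) + Ys \<bullet> (E - Es)
        = - ((Y - Ys) \<bullet> (E - Es) + \<sigma> * (Q (p - E) \<bullet> (E - Es)))"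
      by (simp add: inner_add_left inner_diff_left inner_diff_right algebra_simps)
    ultimately show ?thesis by linarith
  qed
  have A2: "0 \<le> (Y - Ys) \<bullet> (X - Xs) + \<sigma> * (r \<bullet> (X - Xs))"
  proof -
    have "\<sigma> * ((r + (1/\<sigma>) *\<^sub>R Y) \<bullet> (Xs - X)) + Ys \<bullet> (X - Xs) \<le> 0" using i2 i3 by linarith
    moreover have "\<sigma> * ((r + (1/\<sigma>) *\<^sub>R Y) \<bullet> (Xs - X)) + Ys \<bullet> (X - Xs)
        = - ((Y - Ys) \<bullet> (X - Xs) + \<sigma> * (r \<bullet> (X - Xs)))"
      using sig by (simp add: inner_add_left inner_diff_left inner_diff_right algebra_simps)
    ultimately show ?thesis by linarith
  qed
  have sumEX: "(E - Es) + (X - Xs) = J (t - ts) - r"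
  proof -
    have "B + J t - E = X + r" using e1[of z p] unfolding r_def E_def t_def Y_def X_def
      by (simp add: algebra_simps)
    then have h1: "E + X = B + J t - r" by (simp add: algebra_simps)
    have "(E - Es) + (X - Xs) = (E + X) - (Xs + Es)" by (simp add: algebra_simps)
    also have "\<dots> = (B + J t - r) - (B + J ts)" using h1 ks(1) by simp
    also have "\<dots> = J (t - ts) - r" by (simp add: linear_diff[OF lin] algebra_simps)
    finally show ?thesis .
  qed
  have YJ: "(Y - Ys) \<bullet> J (t - ts) = 0"
  proof -
    have "(Y - Ys) \<bullet> J (t - ts) = (t - ts) \<bullet> adjoint J (Y - Ys)" by (simp only: adj inner_commute)
    also have "\<dots> = 0" using F1[of z p] ks(2) by (simp add: linear_diff[OF linA] Y_def)
    finally show ?thesis .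
  qed
  have k1: "(Y - Ys) \<bullet> (E - Es) + (Y - Ys) \<bullet> (X - Xs) = - ((Y - Ys) \<bullet> r)"
  proof -
    have "(Y - Ys) \<bullet> (E - Es) + (Y - Ys) \<bullet> (X - Xs) = (Y - Ys) \<bullet> ((E - Es) + (X - Xs))"
      by (simp only: inner_add_right)
    also have "\<dots> = (Y - Ys) \<bullet> J (t - ts) - (Y - Ys) \<bullet> r" by (simp only: sumEX inner_diff_right)
    finally show ?thesis using YJ by simp
  qed
  have k2: "Q (p - E) \<bullet> (E - Es) = (Q E - Q Es) \<bullet> (p - Q E)"
  proof -
    have "Q (p - E) \<bullet> (E - Es) = Q (p - E) \<bullet> Q (E - Es)" by (rule QQ)
    also have "\<dots> = Q (E - Es) \<bullet> Q (p - E)" by (rule inner_commute)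
    also have "\<dots> = Q (E - Es) \<bullet> (p - E)" by (rule QQ[symmetric])
    also have "\<dots> = Q (E - Es) \<bullet> p - Q (E - Es) \<bullet> E" by (rule inner_diff_right)
    also have "Q (E - Es) \<bullet> E = Q (E - Es) \<bullet> Q E" by (rule QQ)
    also have "Q (E - Es) \<bullet> p - Q (E - Es) \<bullet> Q E = Q (E - Es) \<bullet> (p - Q E)" by (rule inner_diff_right[symmetric])
    finally show ?thesis by (simp add: linear_diff[OF linQ])
  qed
  have FFs: "FF (z, p) = (X - (1/\<sigma>) *\<^sub>R Y, Q E)" by (simp add: FF_def X_def Y_def E_def)
  have T1: "(FF s - (Xs - (1/\<sigma>) *\<^sub>R Ys, Q Es)) \<bullet> (s - FF s)
      = ((X - (1/\<sigma>) *\<^sub>R Y) - (Xs - (1/\<sigma>) *\<^sub>R Ys)) \<bullet> r + (Q E - Q Es) \<bullet> (p - Q E)"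
    unfolding s FFs r_def by (simp add: inner_Pair)
  have T2: "((X - (1/\<sigma>) *\<^sub>R Y) - (Xs - (1/\<sigma>) *\<^sub>R Ys)) \<bullet> r
      = (X - Xs) \<bullet> r - (1/\<sigma>) * ((Y - Ys) \<bullet> r)"
    by (simp add: inner_diff_left algebra_simps)
  have T: "(FF s - (Xs - (1/\<sigma>) *\<^sub>R Ys, Q Es)) \<bullet> (s - FF s)
      = (X - Xs) \<bullet> r - (1/\<sigma>) * ((Y - Ys) \<bullet> r) + (Q E - Q Es) \<bullet> (p - Q E)"
    using T1 T2 by simp
  have a7: "(X - Xs) \<bullet> r = r \<bullet> (X - Xs)" by (rule inner_commute)
  have "0 \<le> (X - Xs) \<bullet> r - (1/\<sigma>) * ((Y - Ys) \<bullet> r) + (Q E - Q Es) \<bullet> (p - Q E)"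
    by (rule comb[OF sig A1 A2 k1 k2 a7])
  then show ?thesis unfolding T .
qed

lemma fix_kkt:
  assumes f: "FF (z, p) = (z, p)"
  shows "kkt (XF z p) (tF z p) (EF z p) (YF z p)"
  unfolding kkt_def
proof (intro conjI allI)
  have z: "z = XF z p - (1/\<sigma>) *\<^sub>R YF z p" and p: "p = Q (EF z p)" using f by (auto simp: FF_def)
  show "B + J (tF z p) = XF z p + EF z p"
    using e1[of z p] z by (simp add: algebra_simps)
  show "adjoint J (YF z p) = 0" by (rule F1)
  fix X'
  have eqa: "B + J (tF z p) - EF z p + (1/\<sigma>) *\<^sub>R YF z p - XF z p = (1/\<sigma>) *\<^sub>R YF z p"
    using e1[of z p] z by (simp add: algebra_simps)
  have "NN (XF z p) + \<sigma> * (((1/\<sigma>) *\<^sub>R YF z p) \<bullet> (X' - XF z p)) \<le> NN X'"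
    using F3[of z p X'] by (simp only: eqa)
  then show "NN (XF z p) + YF z p \<bullet> (X' - XF z p) \<le> NN X'"
    using sig by simp
next
  fix E'
  define e where "e = EF z p"
  have pe: "p = Q e" using f by (auto simp: FF_def e_def)
  have "Q (p - e) = 0" by (simp add: pe linear_diff[OF linQ] QQQ)
  then have "Q (p - EF z p) = 0" by (simp add: e_def)
  then show "lam * l1_norm (EF z p) + YF z p \<bullet> (E' - EF z p) \<le> lam * l1_norm E'"
    using F2[of z p E'] by simp
qed

lemma c_th: "continuous_on S (\<lambda>s. thF (fst s) (snd s))"
  unfolding thF_def cc_def
  by (intro continuous_intros lin_cont[OF linH] lin_cont[OF linA])

lemma c_E: "continuous_on S (\<lambda>s. EF (fst s) (snd s))"
  unfolding EF_def cc_def using lam sig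
  by (intro soft_cont2 continuous_intros lin_cont[OF lin] c_th) auto

lemma c_t: "continuous_on S (\<lambda>s. tF (fst s) (snd s))"
  unfolding tF_def cc_def
  by (intro continuous_intros lin_cont[OF linH] lin_cont[OF linA] c_E)

lemma c_Y: "continuous_on S (\<lambda>s. YF (fst s) (snd s))"
  unfolding YF_def cc_def
  by (intro continuous_intros lin_cont[OF lin] c_t c_E)

lemma c_X: "continuous_on S (\<lambda>s. XF (fst s) (snd s))"
  unfolding XF_def using sig
  by (intro svt_cont2 continuous_intros lin_cont[OF lin] c_t c_E c_Y) auto

lemma c_FF: "continuous_on S FF"
  unfolding FF_def
  by (intro continuous_intros c_X c_Y lin_cont[OF linQ] c_E)

end

lemma quad2:
  fixes a b :: "'a::real_inner"
  shows "norm (a + t *\<^sub>R b)^2 = norm a^2 + 2*t*(a \<bullet> b) + t^2 * norm b^2"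
  unfolding power2_norm_eq_inner
  by (simp add: inner_add_left inner_add_right algebra_simps power2_eq_square inner_commute)

context alg begin

lemma kkt_exists: "\<exists>X t E Y. kkt X t E Y"
proof -
  define C where "C = real CARD('m) * real CARD('n)"
  have C0: "0 \<le> C" by (simp add: C_def)
  have NND: "NN D \<le> C * norm D" for D :: "real^'n^'m"
    using NN_le_l1[of D] l1_le[of D] by (simp add: C_def)
  have "linear (\<lambda>v. H (adjoint J v))" using linear_compose[OF linA linH] by (simp add: o_def)
  then obtain KH where KH: "KH > 0" "\<And>v. norm (H (adjoint J v)) \<le> KH * norm v"
    using linear_bounded_pos by blast
  have tb: "norm t \<le> KH * norm (J t)" for t using KH(2)[of "J t"] by (simp add: HG)
  define mu where "mu n = real n + 1" for n :: nat
  have mu1: "1 \<le> mu n" for n by (simp add: mu_def)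
  define h where "h n w = NN (fst w) + lam * l1_norm (fst (snd w))
      + (mu n / 2) * (norm (B + J (snd (snd w)) - fst w - fst (snd w)))^2"
    for n and w :: "(real^'n^'m) \<times> (real^'n^'m) \<times> (real^'p)"
  define Rt where "Rt = KH * ((1 + 2 * NN B) + norm B + NN B + NN B / lam)"
  have hB: "h n (B, 0, 0) = NN B" for n by (simp add: h_def linear_0[OF lin] l1_norm_def)
  have sub: "norm X \<le> NN B \<and> norm E \<le> NN B / lam \<and> norm t \<le> Rt"
    if hw: "h n (X, E, t) \<le> NN B" for n X E t
  proof -
    define res where "res = B + J t - X - E"
    have h1: "NN X + lam * l1_norm E + (mu n / 2) * (norm res)^2 \<le> NN B"
      using hw by (simp add: h_def res_def)
    have p1: "0 \<le> NN X" "0 \<le> lam * l1_norm E" "0 \<le> (mu n / 2) * (norm res)^2"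
      using NN_nonneg[of X] l1_nonneg[of E] lam mu1[of n] by auto
    have nX: "norm X \<le> NN B" using h1 p1 NN_ge_norm[of X] by linarith
    have "lam * l1_norm E \<le> NN B" using h1 p1 by linarith
    then have "l1_norm E \<le> NN B / lam" using lam by (simp add: field_simps)
    then have nE: "norm E \<le> NN B / lam" using norm_le_l1[of E] by linarith
    have "(mu n / 2) * (norm res)^2 \<le> NN B" using h1 p1 by linarith
    then have "(norm res)^2 \<le> 2 * NN B / mu n" using mu1[of n] by (simp add: field_simps)
    also have "\<dots> \<le> 2 * NN B" using mu1[of n] NN_nonneg[of B]
      by (simp add: divide_le_eq mult_le_cancel_left1)
    finally have nr: "norm res \<le> 1 + 2 * NN B" by (intro sq_le_bound) auto
    have "J t = res - B + X + E" by (simp add: res_def)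
    then have "norm (J t) = norm (res - B + X + E)" by (simp only:)
    moreover have "norm (res - B + X + E) \<le> norm (res - B + X) + norm E" by (rule norm_triangle_ineq)
    moreover have "norm (res - B + X) \<le> norm (res - B) + norm X" by (rule norm_triangle_ineq)
    moreover have "norm (res - B) \<le> norm res + norm B" by (rule norm_triangle_ineq4)
    ultimately have "norm (J t) \<le> norm res + norm B + norm X + norm E" by linarith
    then have "norm (J t) \<le> (1 + 2 * NN B) + norm B + NN B + NN B / lam" using nr nX nE by linarith
    then have "norm t \<le> Rt" unfolding Rt_def using tb[of t] KH(1)
      by (meson mult_left_mono less_imp_le order_trans)
    then show ?thesis using nX nE by blast
  qed
  have ex: "\<forall>n. \<exists>w. \<forall>w'. h n w \<le> h n w'"
  proof
    fix n
    have ch: "continuous_on UNIV (h n)" unfolding h_def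
      by (intro continuous_intros continuous_on_compose2[OF NN_cont] continuous_on_compose2[OF l1_cont]
          lin_cont[OF lin]) auto
    have R: "\<forall>w. h n w \<le> h n (B, 0, 0) \<longrightarrow> norm w \<le> NN B + NN B / lam + Rt"
    proof (intro allI impI)
      fix w :: "(real^'n^'m) \<times> (real^'n^'m) \<times> (real^'p)" assume "h n w \<le> h n (B, 0, 0)"
      moreover obtain X E t where w: "w = (X, E, t)" by (cases w) auto
      ultimately have "norm X \<le> NN B \<and> norm E \<le> NN B / lam \<and> norm t \<le> Rt" using sub hB by auto
      moreover have "norm w \<le> norm X + (norm E + norm t)"
        unfolding w by (meson norm_Pair_le add_left_mono order_trans)
      ultimately show "norm w \<le> NN B + NN B / lam + Rt" by linarith
    qed
    show "\<exists>w. \<forall>w'. h n w \<le> h n w'" by (rule exists_min[OF ch R])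
  qed
  from choice[OF ex] obtain w where w0: "\<forall>n. \<forall>w'. h n (w n) \<le> h n w'" by blast
  then have w: "\<And>n w'. h n (w n) \<le> h n w'" by blast
  define Xn where "Xn n = fst (w n)" for n
  define En where "En n = fst (snd (w n))" for n
  define tn where "tn n = snd (snd (w n))" for n
  define res where "res n = B + J (tn n) - Xn n - En n" for n
  define Yn where "Yn n = mu n *\<^sub>R res n" for n
  have wn: "w n = (Xn n, En n, tn n)" for n by (simp add: Xn_def En_def tn_def)
  have hw: "h n (w n) = NN (Xn n) + lam * l1_norm (En n) + (mu n / 2) * (norm (res n))^2" for n
    by (simp add: h_def wn res_def)
  have gX: "NN (Xn n) + Yn n \<bullet> (X' - Xn n) \<le> NN X'" for n X'
  proof -
    define c where "c = B + J (tn n) - En n"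
    have mn: "\<forall>y. NN (Xn n) + (mu n / 2) * (norm (c - Xn n))^2 \<le> NN y + (mu n / 2) * (norm (c - y))^2"
    proof
      fix y
      have "h n (w n) \<le> h n (y, En n, tn n)" by (rule w)
      moreover have "res n = c - Xn n" by (simp add: res_def c_def)
      then have "h n (w n) = NN (Xn n) + lam * l1_norm (En n) + (mu n / 2) * (norm (c - Xn n))^2"
        unfolding hw by (simp only:)
      moreover have "h n (y, En n, tn n) = NN y + lam * l1_norm (En n) + (mu n / 2) * (norm (c - y))^2"
        unfolding h_def by (simp add: c_def algebra_simps)
      ultimately show "NN (Xn n) + (mu n / 2) * (norm (c - Xn n))^2 \<le> NN y + (mu n / 2) * (norm (c - y))^2"
        by linarith
    qed
    have "NN (Xn n) + 2 * (mu n / 2) * ((c - Xn n) \<bullet> (X' - Xn n)) \<le> NN X'"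
      by (rule fo_quad[OF NN_convex mn])
    moreover have "Yn n = mu n *\<^sub>R (c - Xn n)" by (simp add: Yn_def res_def c_def)
    ultimately show ?thesis by simp
  qed
  have gE: "lam * l1_norm (En n) + Yn n \<bullet> (E' - En n) \<le> lam * l1_norm E'" for n E'
  proof -
    define c where "c = B + J (tn n) - Xn n"
    have cv: "convex_on UNIV (\<lambda>x. lam * l1_norm x)" using lam by (intro convex_on_cmul l1_convex) auto
    have mn: "\<forall>y. lam * l1_norm (En n) + (mu n / 2) * (norm (c - En n))^2 \<le> lam * l1_norm y + (mu n / 2) * (norm (c - y))^2"
    proof
      fix y
      have "h n (w n) \<le> h n (Xn n, y, tn n)" by (rule w)
      moreover have "res n = c - En n" by (simp add: res_def c_def)
      then have "h n (w n) = NN (Xn n) + lam * l1_norm (En n) + (mu n / 2) * (norm (c - En n))^2"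
        unfolding hw by (simp only:)
      moreover have "h n (Xn n, y, tn n) = NN (Xn n) + lam * l1_norm y + (mu n / 2) * (norm (c - y))^2"
        unfolding h_def by (simp add: c_def algebra_simps)
      ultimately show "lam * l1_norm (En n) + (mu n / 2) * (norm (c - En n))^2 \<le> lam * l1_norm y + (mu n / 2) * (norm (c - y))^2"
        by linarith
    qed
    have "lam * l1_norm (En n) + 2 * (mu n / 2) * ((c - En n) \<bullet> (E' - En n)) \<le> lam * l1_norm E'"
      by (rule fo_quad[OF cv mn])
    moreover have "Yn n = mu n *\<^sub>R (c - En n)" by (simp add: Yn_def res_def c_def)
    ultimately show ?thesis by simp
  qed
  have gt: "adjoint J (Yn n) = 0" for n
  proof -
    define Rb where "Rb = B - Xn n - En n"
    define q where "q y = (mu n / 2) * (norm (Rb + J y))^2" for y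
    have rq: "res n = Rb + J (tn n)" by (simp add: res_def Rb_def)
    have mn: "\<forall>y. (\<lambda>_. 0::real) (tn n) + q (tn n) \<le> (\<lambda>_. 0::real) y + q y"
    proof
      fix y
      have "h n (w n) \<le> h n (Xn n, En n, y)" by (rule w)
      moreover have "h n (w n) = NN (Xn n) + lam * l1_norm (En n) + q (tn n)"
        unfolding hw q_def rq by (simp only:)
      moreover have "h n (Xn n, En n, y) = NN (Xn n) + lam * l1_norm (En n) + q y"
        unfolding h_def q_def by (simp add: Rb_def algebra_simps)
      ultimately show "(\<lambda>_. 0::real) (tn n) + q (tn n) \<le> (\<lambda>_. 0::real) y + q y"
        by linarith
    qed
    have pos: "0 \<le> res n \<bullet> J d" for d
    proof -
      define y where "y = tn n + d"
      have qb: "\<forall>\<tau>. 0 < \<tau> \<longrightarrow> \<tau> < 1 \<longrightarrow> q (tn n + \<tau> *\<^sub>R (y - tn n))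
          \<le> q (tn n) - \<tau> * (- (mu n * (res n \<bullet> J d))) + \<tau>^2 * ((mu n / 2) * (norm (J d))^2)"
      proof (intro allI impI)
        fix \<tau> :: real
        have "Rb + J (tn n + \<tau> *\<^sub>R (y - tn n)) = res n + \<tau> *\<^sub>R J d"
          by (simp add: y_def rq linear_add[OF lin] linear_scale[OF lin])
        then show "q (tn n + \<tau> *\<^sub>R (y - tn n))
          \<le> q (tn n) - \<tau> * (- (mu n * (res n \<bullet> J d))) + \<tau>^2 * ((mu n / 2) * (norm (J d))^2)"
          by (simp add: q_def quad2 rq[symmetric] algebra_simps)
      qed
      have "(\<lambda>_. 0::real) (tn n) + (- (mu n * (res n \<bullet> J d))) \<le> (\<lambda>_. 0::real) y"
        by (rule fo[OF _ mn qb]) (simp add: convex_on_const)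
      then have "0 \<le> mu n * (res n \<bullet> J d)" by simp
      then show ?thesis using mu1[of n] by (simp add: zero_le_mult_iff)
    qed
    have "res n \<bullet> J d = 0" for d
      using pos[of d] pos[of "- d"] by (simp add: linear_neg[OF lin])
    then have "adjoint J (res n) \<bullet> adjoint J (res n) = 0"
      by (simp add: adj[symmetric] inner_commute)
    then have "adjoint J (res n) = 0" by simp
    then show ?thesis by (simp add: Yn_def linear_scale[OF linA])
  qed
  have nY: "norm (Yn n) \<le> C" for n
  proof -
    have "Yn n \<bullet> Yn n \<le> NN (Xn n + Yn n) - NN (Xn n)" using gX[of n "Xn n + Yn n"] by simp
    also have "\<dots> \<le> NN (Yn n)" using NN_add[of "Xn n" "Yn n"] by simp
    also have "\<dots> \<le> C * norm (Yn n)" by (rule NND)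
    finally have "norm (Yn n) * norm (Yn n) \<le> C * norm (Yn n)"
      by (simp add: power2_norm_eq_inner[symmetric] power2_eq_square)
    then show ?thesis
    proof (cases "norm (Yn n) = 0")
      case True then show ?thesis using C0 by simp
    next
      case False then have "0 < norm (Yn n)" by simp
      then show ?thesis using mult_right_le_imp_le[of "norm (Yn n)" "norm (Yn n)" C]
        \<open>norm (Yn n) * norm (Yn n) \<le> C * norm (Yn n)\<close> by simp
    qed
  qed
  have bXEt: "norm (Xn n) \<le> NN B \<and> norm (En n) \<le> NN B / lam \<and> norm (tn n) \<le> Rt" for n
    using sub[of n "Xn n" "En n" "tn n"] w[of n "(B, 0, 0)"] hB[of n] wn[of n] by simp
  have res0: "res \<longlonglongrightarrow> 0"
  proof (rule Lim_null_comparison)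
    show "\<forall>\<^sub>F n in sequentially. norm (res n) \<le> C * inverse (real (Suc n))"
    proof (intro always_eventually allI)
      fix n
      have "res n = (1 / mu n) *\<^sub>R Yn n" using mu1[of n] by (simp add: Yn_def)
      then have "norm (res n) = norm (Yn n) / mu n" using mu1[of n] by simp
      also have "\<dots> \<le> C / mu n" using nY[of n] mu1[of n] by (simp add: divide_right_mono)
      finally show "norm (res n) \<le> C * inverse (real (Suc n))" by (simp add: mu_def divide_inverse add.commute)
    qed
    show "(\<lambda>n. C * inverse (real (Suc n))) \<longlonglongrightarrow> 0"
      using tendsto_mult_right_zero[OF LIMSEQ_inverse_real_of_nat] by simp
  qed
  define v where "v n = (Xn n, En n, tn n, Yn n)" for n
  have "bounded (range v)"
    unfolding bounded_iff
  proof (intro exI ballI)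
    fix x assume "x \<in> range v"
    then obtain n where x: "x = v n" by blast
    have "norm x \<le> norm (Xn n) + (norm (En n) + (norm (tn n) + norm (Yn n)))"
      unfolding x v_def by (meson norm_Pair_le add_left_mono order_trans)
    then show "norm x \<le> NN B + (NN B / lam + (Rt + C))" using bXEt[of n] nY[of n] by linarith
  qed
  then obtain l r where r: "strict_mono r" and vl: "(v \<circ> r) \<longlonglongrightarrow> l"
    using bounded_imp_convergent_subsequence by blast
  obtain Xs Es ts Ys where l: "l = (Xs, Es, ts, Ys)" by (cases l) auto
  have cX: "(\<lambda>j. Xn (r j)) \<longlonglongrightarrow> Xs" using tendsto_fst[OF vl] by (simp add: l v_def o_def)
  have cE: "(\<lambda>j. En (r j)) \<longlonglongrightarrow> Es" using tendsto_fst[OF tendsto_snd[OF vl]] by (simp add: l v_def o_def)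
  have ct: "(\<lambda>j. tn (r j)) \<longlonglongrightarrow> ts"
    using tendsto_fst[OF tendsto_snd[OF tendsto_snd[OF vl]]] by (simp add: l v_def o_def)
  have cY: "(\<lambda>j. Yn (r j)) \<longlonglongrightarrow> Ys"
    using tendsto_snd[OF tendsto_snd[OF tendsto_snd[OF vl]]] by (simp add: l v_def o_def)
  have k1: "B + J ts = Xs + Es"
  proof -
    have "(\<lambda>j. res (r j)) \<longlonglongrightarrow> B + J ts - Xs - Es"
      unfolding res_def by (intro tendsto_intros lin_tendsto[OF lin] ct cX cE)
    moreover have "(\<lambda>j. res (r j)) \<longlonglongrightarrow> 0" using LIMSEQ_subseq_LIMSEQ[OF res0 r] by (simp add: o_def)
    ultimately have "B + J ts - Xs - Es = 0" using LIMSEQ_unique by blast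
    then show ?thesis by (simp add: algebra_simps)
  qed
  have k2: "adjoint J Ys = 0"
  proof -
    have "(\<lambda>j. adjoint J (Yn (r j))) \<longlonglongrightarrow> adjoint J Ys" by (rule lin_tendsto[OF linA cY])
    moreover have "(\<lambda>j. adjoint J (Yn (r j))) \<longlonglongrightarrow> 0" using gt by simp
    ultimately show ?thesis using LIMSEQ_unique by blast
  qed
  have k3: "NN Xs + Ys \<bullet> (X' - Xs) \<le> NN X'" for X'
  proof -
    have "(\<lambda>j. NN X' - NN (Xn (r j)) - Yn (r j) \<bullet> (X' - Xn (r j))) \<longlonglongrightarrow> NN X' - NN Xs - Ys \<bullet> (X' - Xs)"
    proof -
      have nX: "(\<lambda>j. NN (Xn (r j))) \<longlonglongrightarrow> NN Xs"
        by (rule continuous_on_tendsto_compose[OF NN_cont[of UNIV] cX]) simp_all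
      show ?thesis by (intro tendsto_intros nX cX cY)
    qed
    moreover have "\<forall>j. 0 \<le> NN X' - NN (Xn (r j)) - Yn (r j) \<bullet> (X' - Xn (r j))" using gX by (simp add: algebra_simps)
    ultimately have "0 \<le> NN X' - NN Xs - Ys \<bullet> (X' - Xs)" by (intro LIMSEQ_le_const) auto
    then show ?thesis by simp
  qed
  have k4: "lam * l1_norm Es + Ys \<bullet> (E' - Es) \<le> lam * l1_norm E'" for E'
  proof -
    have "(\<lambda>j. lam * l1_norm E' - lam * l1_norm (En (r j)) - Yn (r j) \<bullet> (E' - En (r j)))
        \<longlonglongrightarrow> lam * l1_norm E' - lam * l1_norm Es - Ys \<bullet> (E' - Es)"
    proof -
      have nE: "(\<lambda>j. l1_norm (En (r j))) \<longlonglongrightarrow> l1_norm Es"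
        by (rule continuous_on_tendsto_compose[OF l1_cont[of UNIV] cE]) simp_all
      show ?thesis by (intro tendsto_intros nE cE cY)
    qed
    moreover have "\<forall>j. 0 \<le> lam * l1_norm E' - lam * l1_norm (En (r j)) - Yn (r j) \<bullet> (E' - En (r j))"
      using gE by (simp add: algebra_simps)
    ultimately have "0 \<le> lam * l1_norm E' - lam * l1_norm Es - Ys \<bullet> (E' - Es)" by (intro LIMSEQ_le_const) auto
    then show ?thesis by simp
  qed
  have "kkt Xs ts Es Ys" unfolding kkt_def using k1 k2 k3 k4 by blast
  then show ?thesis by blast
qed

end

theorem theorem4:
  fixes B :: "real^'n^'m" and J :: "real^'p \<Rightarrow> real^'n^'m"
    and lam \<sigma> \<rho> :: real
    and Xt Et Yt X E Y :: "nat \<Rightarrow> real^'n^'m"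
    and tt th t :: "nat \<Rightarrow> real^'p"
  assumes lin: "linear J"
    and inv: "bij (adjoint J \<circ> J)"
    and lam: "lam > 0" and sig: "\<sigma> > 0" and rho: "0 < \<rho>" "\<rho> < 2"
    and s1: "\<And>k. th (Suc k) = - inv (adjoint J \<circ> J)
               (adjoint J (B - Xt k - Et k) + adjoint J ((1/\<sigma>) *\<^sub>R Yt k))"
    and s2: "\<And>k. E (Suc k) = soft (lam/\<sigma>) (B + J (th (Suc k)) - Xt k + (1/\<sigma>) *\<^sub>R Yt k)"
    and s3: "\<And>k. t (Suc k) = - inv (adjoint J \<circ> J)
               (adjoint J (B - Xt k - E (Suc k)) + adjoint J ((1/\<sigma>) *\<^sub>R Yt k))"
    and s4: "\<And>k. Y (Suc k) = Yt k + \<sigma> *\<^sub>R (B + J (t (Suc k)) - Xt k - E (Suc k))"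
    and s5: "\<And>k. X (Suc k) = svt (1/\<sigma>) (B + J (t (Suc k)) - E (Suc k) + (1/\<sigma>) *\<^sub>R Y (Suc k))"
    and s6: "\<And>k. Xt (Suc k) = Xt k + \<rho> *\<^sub>R (X (Suc k) - Xt k)"
            "\<And>k. tt (Suc k) = tt k + \<rho> *\<^sub>R (t (Suc k) - tt k)"
            "\<And>k. Et (Suc k) = Et k + \<rho> *\<^sub>R (E (Suc k) - Et k)"
            "\<And>k. Yt (Suc k) = Yt k + \<rho> *\<^sub>R (Y (Suc k) - Yt k)"
  shows "\<exists>Xb tb Eb Yb. (X \<longlonglongrightarrow> Xb) \<and> (t \<longlonglongrightarrow> tb) \<and> (E \<longlonglongrightarrow> Eb) \<and> (Y \<longlonglongrightarrow> Yb)
           \<and> optimal_P lam B J Xb tb Eb"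
proof -
  interpret A: alg B J lam \<sigma> by (rule alg.intro) (use lin inv lam sig in auto)
  define st where "st k = (Xt k - (1/\<sigma>) *\<^sub>R Yt k, A.Q (Et k))" for k
  have hth: "th (Suc k) = A.thF (fst (st k)) (snd (st k))" for k
    unfolding s1 A.thF_def A.cc_def A.H_def st_def
    by (simp add: linear_add[OF A.linA] linear_diff[OF A.linA] linear_scale[OF A.linA] A.JQ algebra_simps)
  have hE: "E (Suc k) = A.EF (fst (st k)) (snd (st k))" for k
    unfolding s2 A.EF_def A.cc_def hth[symmetric] by (simp add: st_def algebra_simps)
  have ht: "t (Suc k) = A.tF (fst (st k)) (snd (st k))" for k
    unfolding s3 A.tF_def A.cc_def A.H_def hE[symmetric]
    by (simp add: st_def linear_add[OF A.linA] linear_diff[OF A.linA] linear_scale[OF A.linA] algebra_simps)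
  have hY: "Y (Suc k) = A.YF (fst (st k)) (snd (st k))" for k
    unfolding s4 A.YF_def A.cc_def ht[symmetric] hE[symmetric] using sig
    by (simp add: st_def algebra_simps)
  have hX: "X (Suc k) = A.XF (fst (st k)) (snd (st k))" for k
    unfolding s5 A.XF_def ht[symmetric] hE[symmetric] hY[symmetric] ..
  have it: "st (Suc k) = st k + \<rho> *\<^sub>R (A.FF (st k) - st k)" for k
  proof -
    have "A.FF (st k) = (X (Suc k) - (1/\<sigma>) *\<^sub>R Y (Suc k), A.Q (E (Suc k)))"
      unfolding A.FF_def hX hY hE ..
    then show ?thesis unfolding st_def s6
      by (simp add: linear_add[OF A.linQ] linear_diff[OF A.linQ] linear_scale[OF A.linQ] algebra_simps)
  qed
  have good0: "\<exists>q. \<forall>x. 0 \<le> (A.FF x - q) \<bullet> (x - A.FF x)"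
    using A.kkt_exists A.good by blast
  have goodfix: "\<forall>x. 0 \<le> (A.FF x - q) \<bullet> (x - A.FF x)" if "A.FF q = q" for q
  proof -
    have f: "A.FF (fst q, snd q) = (fst q, snd q)" using that by simp
    have k: "A.kkt (A.XF (fst q) (snd q)) (A.tF (fst q) (snd q)) (A.EF (fst q) (snd q)) (A.YF (fst q) (snd q))"
      by (rule A.fix_kkt[OF f])
    have "q = A.FF q" using that by simp
    also have "\<dots> = (A.XF (fst q) (snd q) - (1/\<sigma>) *\<^sub>R A.YF (fst q) (snd q), A.Q (A.EF (fst q) (snd q)))"
      by (simp add: A.FF_def)
    finally have qe: "q = \<dots>" .
    show ?thesis by (subst qe) (rule allI, rule A.good[OF k])
  qed
  obtain q where sq: "st \<longlonglongrightarrow> q" and fq: "A.FF q = q"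
    using km[where F = A.FF and s = st, OF A.c_FF[of UNIV] it rho(1) rho(2) good0 goodfix] by blast
  have f: "A.FF (fst q, snd q) = (fst q, snd q)" using fq by simp
  have k: "A.kkt (A.XF (fst q) (snd q)) (A.tF (fst q) (snd q)) (A.EF (fst q) (snd q)) (A.YF (fst q) (snd q))"
    by (rule A.fix_kkt[OF f])
  have lim: "(\<lambda>k. g (fst (st k)) (snd (st k))) \<longlonglongrightarrow> g (fst q) (snd q)"
    if "continuous_on UNIV (\<lambda>s. g (fst s) (snd s))" for g :: "real^'n^'m \<Rightarrow> real^'n^'m \<Rightarrow> 'z::topological_space"
    using continuous_on_tendsto_compose[OF that sq] by simp
  have "(\<lambda>k. X (Suc k)) \<longlonglongrightarrow> A.XF (fst q) (snd q)" unfolding hX by (rule lim[OF A.c_X])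
  then have cX: "X \<longlonglongrightarrow> A.XF (fst q) (snd q)" by (rule LIMSEQ_imp_Suc)
  have "(\<lambda>k. t (Suc k)) \<longlonglongrightarrow> A.tF (fst q) (snd q)" unfolding ht by (rule lim[OF A.c_t])
  then have ct: "t \<longlonglongrightarrow> A.tF (fst q) (snd q)" by (rule LIMSEQ_imp_Suc)
  have "(\<lambda>k. E (Suc k)) \<longlonglongrightarrow> A.EF (fst q) (snd q)" unfolding hE by (rule lim[OF A.c_E])
  then have cE: "E \<longlonglongrightarrow> A.EF (fst q) (snd q)" by (rule LIMSEQ_imp_Suc)
  have "(\<lambda>k. Y (Suc k)) \<longlonglongrightarrow> A.YF (fst q) (snd q)" unfolding hY by (rule lim[OF A.c_Y])
  then have cY: "Y \<longlonglongrightarrow> A.YF (fst q) (snd q)" by (rule LIMSEQ_imp_Suc)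
  show ?thesis using cX ct cE cY A.kkt_opt[OF k] by blast
qed


end
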